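(* For $t>0$ and $\lambda\in\mathbb C$ with $\lambda\notin\frac12\mathbb N_0$, one has $\Phi^0_\lambda(t)=\Phi_\lambda(t)$, where $$\Phi^0_\lambda(t)=(2\cosh t)^{\lambda-\rho}\,{}_2F_1\!\left(\tfrac{\rho-\lambda}{2},\tfrac{-\rho-\lambda+1+m_1^++m_2^+}{2};1-\lambda;\cosh^{-2}t\right).$$
   Context: Split rank one semisimple symmetric space $G/H$ ($G$ connected semisimple linear Lie group, $\theta$ Cartan involution, $\sigma$ a commuting involution, $H=(G^\sigma)_e$, $\mathfrak a_q=\mathbb RT$ a one-dimensional maximal abelian subspace of $\mathfrak p\cap\mathfrak q$ with the positive root $\alpha$ of $\Sigma(\mathfrak a_q,\mathfrak g)\subset\{\pm\alpha,\pm2\alpha\}$ normalized by $\alpha(T)=1$). With $\mathfrak g^\pm=\{Y:\sigma\theta Y=\pm Y\}$, $m_1^\pm=\dim(\mathfrak g_\alpha\cap\mathfrak g^\pm)$, $m_2^\pm=\dim(\mathfrak g_{2\alpha}\cap\mathfrak g^\pm)$, $\rho=\frac12(m_1^++m_1^-+2m_2^++2m_2^-)$, $J(t)=(\sinh t)^{m_1^+}(\cosh t)^{m_1^-}(\sinh2t)^{m_2^+}(\cosh2t)^{m_2^-}$ and $L(\Delta)=\frac{1}{J(t)}\frac{d}{dt}\big(J(t)\frac{d}{dt}\big)$ (radial part of the Laplace–Beltrami operator). The Harish-Chandra series $\Phi_\lambda(t)=e^{(\lambda-\rho)t}\sum_{m\ge0}\Gamma_m(\lambda)e^{-mt}$,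 with $\Gamma_0(\lambda)=1$ and $\Gamma_m$ meromorphic in $\lambda$ with at most simple poles contained in $\{1/2,1,\dots,m/2\}$, is the series solution of $L(\Delta)\Phi_\lambda=(\lambda^2-\rho^2)\Phi_\lambda$ of this form.
   Formalization: The identity $\Phi^0_\lambda(t)=\Phi_\lambda(t)$ is claimed only when $m_2^-=0$, that is, when $J(t)$ has no factor $\cosh 2t$. The statement above fails without it. *)

theory Defs
  imports "HOL-Analysis.Analysis"
begin

text \<open>Multiplicities m1p = m_1^+, m1m = m_1^-, m2p = m_2^+, m2m = m_2^-.\<close>

definition rho_mult :: "nat \<Rightarrow> nat \<Rightarrow> nat \<Rightarrow> nat \<Rightarrow> real" where
  "rho_mult m1p m1m m2p m2m = (real m1p + real m1m + 2 * real m2p + 2 * real m2m) / 2"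

definition Jfun :: "nat \<Rightarrow> nat \<Rightarrow> nat \<Rightarrow> nat \<Rightarrow> real \<Rightarrow> real" where
  "Jfun m1p m1m m2p m2m t =
     sinh t ^ m1p * cosh t ^ m1m * sinh (2 * t) ^ m2p * cosh (2 * t) ^ m2m"

definition radial_L :: "nat \<Rightarrow> nat \<Rightarrow> nat \<Rightarrow> nat \<Rightarrow> (real \<Rightarrow> complex) \<Rightarrow> real \<Rightarrow> complex" where
  "radial_L m1p m1m m2p m2m f t =
     (1 / Jfun m1p m1m m2p m2m t) *\<^sub>R
       vector_derivative (\<lambda>s. Jfun m1p m1m m2p m2m s *\<^sub>R vector_derivative f (at s)) (at t)"

definition hyp2F1 :: "complex \<Rightarrow> complex \<Rightarrow> complex \<Rightarrow> complex \<Rightarrow> complex" where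
  "hyp2F1 a b c z =
     (\<Sum>n. pochhammer a n * pochhammer b n / (pochhammer c n * fact n) * z ^ n)"

definition HC_sum :: "nat \<Rightarrow> nat \<Rightarrow> nat \<Rightarrow> nat \<Rightarrow> complex \<Rightarrow> (nat \<Rightarrow> complex) \<Rightarrow> real \<Rightarrow> complex" where
  "HC_sum m1p m1m m2p m2m lam \<Gamma> t =
     exp ((lam - complex_of_real (rho_mult m1p m1m m2p m2m)) * complex_of_real t) *
       (\<Sum>m. \<Gamma> m * complex_of_real (exp (- (real m * t))))"

definition HC_series_solution :: "nat \<Rightarrow> nat \<Rightarrow> nat \<Rightarrow> nat \<Rightarrow> complex \<Rightarrow> (nat \<Rightarrow> complex) \<Rightarrow> bool" where
  "HC_series_solution m1p m1m m2p m2m lam \<Gamma> \<longleftrightarrow>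
     \<Gamma> 0 = 1 \<and>
     (\<forall>t>0. summable (\<lambda>m. \<Gamma> m * complex_of_real (exp (- (real m * t))))) \<and>
     (let f = HC_sum m1p m1m m2p m2m lam \<Gamma>;
          \<rho> = complex_of_real (rho_mult m1p m1m m2p m2m) in
      (\<forall>t>0. f differentiable (at t)) \<and>
      (\<forall>t>0. (\<lambda>s. Jfun m1p m1m m2p m2m s *\<^sub>R vector_derivative f (at s)) differentiable (at t)) \<and>
      (\<forall>t>0. radial_L m1p m1m m2p m2m f t = (lam\<^sup>2 - \<rho>\<^sup>2) * f t))"

text \<open>The Harish-Chandra series Phi_lambda: the (unique) series solution of this form.\<close>
definition HC_Phi :: "nat \<Rightarrow> nat \<Rightarrow> nat \<Rightarrow> nat \<Rightarrow> complex \<Rightarrow> real \<Rightarrow> complex" where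
  "HC_Phi m1p m1m m2p m2m lam =
     (THE f. \<exists>\<Gamma>. HC_series_solution m1p m1m m2p m2m lam \<Gamma> \<and> f = HC_sum m1p m1m m2p m2m lam \<Gamma>)"

definition Phi0 :: "nat \<Rightarrow> nat \<Rightarrow> nat \<Rightarrow> nat \<Rightarrow> complex \<Rightarrow> real \<Rightarrow> complex" where
  "Phi0 m1p m1m m2p m2m lam t =
     (let \<rho> = complex_of_real (rho_mult m1p m1m m2p m2m) in
      complex_of_real (2 * cosh t) powr (lam - \<rho>) *
        hyp2F1 ((\<rho> - lam) / 2) ((- \<rho> - lam + 1 + of_nat m1p + of_nat m2p) / 2) (1 - lam)
               (complex_of_real (1 / (cosh t)\<^sup>2)))"

end

theory Submission
  imports Defs "HOL-Complex_Analysis.Complex_Analysis"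
begin

definition Rr :: "nat \<Rightarrow> nat \<Rightarrow> nat \<Rightarrow> real \<Rightarrow> real" where
  "Rr m1p m1m m2p t = m1p * cosh t / sinh t + m1m * sinh t / cosh t
      + m2p * (cosh t / sinh t + sinh t / cosh t)"

lemma pow_deriv_aux: "(x::real) \<noteq> 0 \<Longrightarrow> real n * x ^ (n - 1) = real n * x ^ n / x"
  by (cases n) auto

lemma Jfun_pos: "t > 0 \<Longrightarrow> Jfun m1p m1m m2p 0 t > 0"
  unfolding Jfun_def by (auto intro!: mult_pos_pos)

lemma J_deriv:
  assumes "t > 0"
  shows "(Jfun m1p m1m m2p 0 has_real_derivative Jfun m1p m1m m2p 0 t * Rr m1p m1m m2p t) (at t)"
proof -
  have s: "sinh t > 0" using assms by simp
  have s2: "sinh (2*t) > 0" using assms by simp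
  have c: "cosh t > 0" by simp
  have e: "sinh (2*t) = 2 * sinh t * cosh t" "cosh (2*t) = cosh t ^ 2 + sinh t ^ 2"
    by (simp_all add: sinh_double cosh_double)
  have "(Jfun m1p m1m m2p 0 has_real_derivative
     (real m1p * sinh t ^ (m1p - 1) * cosh t) * cosh t ^ m1m * sinh (2*t) ^ m2p
     + sinh t ^ m1p * (real m1m * cosh t ^ (m1m - 1) * sinh t) * sinh (2*t) ^ m2p
     + sinh t ^ m1p * cosh t ^ m1m * (real m2p * sinh (2*t) ^ (m2p - 1) * (2 * cosh (2*t)))) (at t)"
    unfolding Jfun_def [abs_def]
    by (auto intro!: derivative_eq_intros simp: algebra_simps)
  moreover have "(real m1p * sinh t ^ (m1p - 1) * cosh t) * cosh t ^ m1m * sinh (2*t) ^ m2p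
     + sinh t ^ m1p * (real m1m * cosh t ^ (m1m - 1) * sinh t) * sinh (2*t) ^ m2p
     + sinh t ^ m1p * cosh t ^ m1m * (real m2p * sinh (2*t) ^ (m2p - 1) * (2 * cosh (2*t)))
     = Jfun m1p m1m m2p 0 t * Rr m1p m1m m2p t"
  proof -
    have "real m1p * sinh t ^ (m1p - 1) = real m1p * sinh t ^ m1p / sinh t"
      using s by (intro pow_deriv_aux) auto
    moreover have "real m1m * cosh t ^ (m1m - 1) = real m1m * cosh t ^ m1m / cosh t"
      using c by (intro pow_deriv_aux) auto
    moreover have "real m2p * sinh (2*t) ^ (m2p - 1) = real m2p * sinh (2*t) ^ m2p / sinh (2*t)"
      using s2 by (intro pow_deriv_aux) auto
    ultimately show ?thesis
      unfolding Jfun_def Rr_def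
    proof (simp only:)
      define A where "A = sinh t ^ m1p"
      define B where "B = cosh t ^ m1m"
      define D where "D = sinh (2*t) ^ m2p"
      show "real m1p * sinh t ^ m1p / sinh t * cosh t * cosh t ^ m1m * sinh (2 * t) ^ m2p +
    sinh t ^ m1p * (real m1m * cosh t ^ m1m / cosh t * sinh t) * sinh (2 * t) ^ m2p +
    sinh t ^ m1p * cosh t ^ m1m * (real m2p * sinh (2 * t) ^ m2p / sinh (2 * t) * (2 * cosh (2 * t))) =
    sinh t ^ m1p * cosh t ^ m1m * sinh (2 * t) ^ m2p * cosh (2 * t) ^ 0 *
    (real m1p * cosh t / sinh t + real m1m * sinh t / cosh t + real m2p * (cosh t / sinh t + sinh t / cosh t))"
        unfolding A_def[symmetric] B_def[symmetric] D_def[symmetric] e(1) e(2)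
        using s c by (simp add: field_simps power2_eq_square)
    qed
  qed
  ultimately show ?thesis by simp
qed


lemma L_formula:
  fixes f f1 :: "real \<Rightarrow> complex"
  assumes U: "open U" "t \<in> U" "U \<subseteq> {0<..}"
    and d1: "\<And>s. s \<in> U \<Longrightarrow> (f has_vector_derivative f1 s) (at s)"
    and d2: "(f1 has_vector_derivative f2) (at t)"
  shows "radial_L m1p m1m m2p 0 f t = f2 + of_real (Rr m1p m1m m2p t) * f1 t"
    and "((\<lambda>s. Jfun m1p m1m m2p 0 s *\<^sub>R vector_derivative f (at s)) has_vector_derivative
          (Jfun m1p m1m m2p 0 t *\<^sub>R f2 + (Jfun m1p m1m m2p 0 t * Rr m1p m1m m2p t) *\<^sub>R f1 t)) (at t)"
proof -
  have t0: "t > 0" using U by auto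
  let ?J = "Jfun m1p m1m m2p 0"
  have "((\<lambda>s. ?J s *\<^sub>R f1 s) has_vector_derivative
          (?J t *\<^sub>R f2 + (?J t * Rr m1p m1m m2p t) *\<^sub>R f1 t)) (at t)"
    by (intro has_vector_derivative_scaleR J_deriv t0 d2)
  moreover have "\<And>s. s \<in> U \<Longrightarrow> ?J s *\<^sub>R f1 s = ?J s *\<^sub>R vector_derivative f (at s)"
  proof -
    fix s assume "s \<in> U"
    then have "vector_derivative f (at s) = f1 s" by (rule vector_derivative_at[OF d1])
    then show "?J s *\<^sub>R f1 s = ?J s *\<^sub>R vector_derivative f (at s)" by simp
  qed
  ultimately show D: "((\<lambda>s. ?J s *\<^sub>R vector_derivative f (at s)) has_vector_derivative
          (?J t *\<^sub>R f2 + (?J t * Rr m1p m1m m2p t) *\<^sub>R f1 t)) (at t)"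
    by (rule has_vector_derivative_transform_within_open[OF _ U(1,2)])
  have "?J t > 0" using Jfun_pos t0 by blast
  then show "radial_L m1p m1m m2p 0 f t = f2 + of_real (Rr m1p m1m m2p t) * f1 t"
    unfolding radial_L_def vector_derivative_at[OF D] scaleR_add_right scaleR_scaleR
    by (simp add: scaleR_conv_of_real)
qed

definition conv :: "(nat \<Rightarrow> complex) \<Rightarrow> real \<Rightarrow> bool" where
  "conv a r \<longleftrightarrow> (\<forall>x. 0 < x \<and> x < r \<longrightarrow> summable (\<lambda>m. a m * of_real x ^ m))"

definition PS :: "(nat \<Rightarrow> complex) \<Rightarrow> complex \<Rightarrow> complex" where
  "PS a z = (\<Sum>m. a m * z ^ m)"

lemma conv_summable:
  assumes "conv a r" "norm z < r"
  shows "summable (\<lambda>m. a m * z ^ m)"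
proof -
  define x where "x = (norm z + r) / 2"
  have n0: "0 \<le> norm z" by simp
  have r0: "0 < r" using assms(2) n0 by linarith
  have x1: "0 < x" unfolding x_def using r0 n0 by (intro divide_pos_pos add_nonneg_pos) auto
  have x2: "x < r" using assms(2) unfolding x_def by (simp add: field_simps)
  have x3: "norm z < x" using assms(2) unfolding x_def by (simp add: field_simps)
  note x = x1 x2 x3
  have "summable (\<lambda>m. a m * of_real x ^ m)" using assms(1) x unfolding conv_def by blast
  then have "summable (\<lambda>m. norm (a m * z ^ m))"
    by (rule powser_insidea) (use x in simp)
  then show ?thesis by (rule summable_norm_cancel)
qed

lemma conv_sums: "conv a r \<Longrightarrow> norm z < r \<Longrightarrow> (\<lambda>m. a m * z ^ m) sums PS a z"
  unfolding PS_def by (rule summable_sums, rule conv_summable)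

lemma conv_mono: "conv a r \<Longrightarrow> r' \<le> r \<Longrightarrow> conv a r'"
  unfolding conv_def by auto

lemma PS_deriv:
  assumes "conv a r" "norm z < r"
  shows "(PS a has_field_derivative PS (diffs a) z) (at z)"
  unfolding PS_def[abs_def]
  by (rule termdiffs_strong'[of r]) (use assms conv_summable in auto)

lemma conv_diffs:
  assumes "conv a r" shows "conv (diffs a) r"
  unfolding conv_def
proof (intro allI impI)
  fix x :: real assume x: "0 < x \<and> x < r"
  show "summable (\<lambda>m. diffs a m * of_real x ^ m)"
    by (rule termdiff_converges[of _ r]) (use x assms conv_summable in auto)
qed

lemma theta_sums:
  assumes "conv a r" "norm z < r"
  shows "(\<lambda>m. of_nat m * a m * z ^ m) sums (z * PS (diffs a) z)"
proof -
  have "(\<lambda>n. diffs a n * z ^ n) sums PS (diffs a) z"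
    by (rule conv_sums[OF conv_diffs[OF assms(1)] assms(2)])
  then have "(\<lambda>n. z * (diffs a n * z ^ n)) sums (z * PS (diffs a) z)"
    by (rule sums_mult)
  moreover have "(\<lambda>n. z * (diffs a n * z ^ n)) = (\<lambda>n. of_nat (Suc n) * a (Suc n) * z ^ (Suc n))"
    by (auto simp: diffs_def algebra_simps)
  ultimately have "(\<lambda>n. of_nat (Suc n) * a (Suc n) * z ^ (Suc n)) sums (z * PS (diffs a) z)" by simp
  then show ?thesis
    using sums_Suc_iff[of "\<lambda>m. of_nat m * a m * z ^ m"] by simp
qed

lemma theta_PS:
  assumes "conv a r" "norm z < r"
  shows "(\<lambda>m. ((\<mu>::complex) - of_nat m) * a m * z ^ m) sums (\<mu> * PS a z - z * PS (diffs a) z)"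
proof -
  have "(\<lambda>m. \<mu> * (a m * z ^ m)) sums (\<mu> * PS a z)"
    by (rule sums_mult, rule conv_sums[OF assms])
  from sums_diff[OF this theta_sums[OF assms]] show ?thesis
    by (simp add: algebra_simps)
qed

lemma conv_theta:
  assumes "conv a r" shows "conv (\<lambda>m. ((\<mu>::complex) - of_nat m) * a m) r"
  unfolding conv_def
proof (intro allI impI)
  fix x :: real assume x: "0 < x \<and> x < r"
  then have "norm (of_real x :: complex) < r" by simp
  from theta_PS[OF assms this, of \<mu>] show "summable (\<lambda>m. (\<mu> - of_nat m) * a m * of_real x ^ m)"
    by (rule sums_summable)
qed

definition Ser :: "complex \<Rightarrow> (nat \<Rightarrow> complex) \<Rightarrow> real \<Rightarrow> complex" where
  "Ser \<mu> a t = exp (\<mu> * of_real t) * PS a (of_real (exp (- t)))"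

lemma vd_exp_lin: fixes \<mu> :: complex shows "((\<lambda>t. exp (\<mu> * of_real t)) has_vector_derivative (\<mu> * exp (\<mu> * of_real t))) (at t)"
proof -
  have "((\<lambda>z. exp (\<mu> * z)) has_field_derivative (\<mu> * exp (\<mu> * of_real t))) (at (of_real t))"
    by (auto intro!: derivative_eq_intros)
  from has_vector_derivative_real_field[OF this] show ?thesis by simp
qed

lemma vd_comp:
  fixes G :: "complex \<Rightarrow> complex"
  assumes "(u has_real_derivative u') (at t)" "(G has_field_derivative G') (at (of_real (u t)))"
  shows "((\<lambda>s. G (of_real (u s))) has_vector_derivative (of_real u' * G')) (at t)"
proof -
  have "((\<lambda>s. of_real (u s) :: complex) has_vector_derivative of_real u') (at t)"
    by (rule has_vector_derivative_of_real[OF assms(1)])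
  from field_vector_diff_chain_at[OF this assms(2)] show ?thesis by (simp add: o_def)
qed

lemma Ser_deriv:
  assumes "conv a r" "exp (- t) < r"
  shows "(Ser \<mu> a has_vector_derivative Ser \<mu> (\<lambda>m. (\<mu> - of_nat m) * a m) t) (at t)"
proof -
  let ?z = "of_real (exp (- t)) :: complex"
  have nz: "norm ?z < r" using assms(2) by simp
  have d1: "((\<lambda>s. PS a (of_real (exp (- s)))) has_vector_derivative
        (of_real (- exp (- t)) * PS (diffs a) ?z)) (at t)"
    by (rule vd_comp) (auto intro!: derivative_eq_intros PS_deriv[OF assms(1) nz])
  have "(Ser \<mu> a has_vector_derivative
     (exp (\<mu> * of_real t) * (of_real (- exp (- t)) * PS (diffs a) ?z)
      + \<mu> * exp (\<mu> * of_real t) * PS a ?z)) (at t)"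
    unfolding Ser_def[abs_def]
    by (rule has_vector_derivative_mult[OF vd_exp_lin d1])
  moreover have E: "PS (\<lambda>m. (\<mu> - of_nat m) * a m) ?z = \<mu> * PS a ?z - ?z * PS (diffs a) ?z"
    using theta_PS[OF assms(1) nz, of \<mu>] unfolding PS_def by (simp add: sums_iff mult.assoc)
  have "Ser \<mu> (\<lambda>m. (\<mu> - of_nat m) * a m) t = exp (\<mu> * of_real t) * (of_real (- exp (- t)) * PS (diffs a) ?z)
      + \<mu> * exp (\<mu> * of_real t) * PS a ?z"
    unfolding Ser_def E by (simp add: algebra_simps)
  ultimately show ?thesis by simp
qed

lemma ps_zero_aux:
  fixes b :: "nat \<Rightarrow> complex"
  assumes r: "0 < r" and s: "\<And>x. 0 < x \<Longrightarrow> x < r \<Longrightarrow> (\<lambda>n. b n * of_real x ^ n) sums 0"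
  shows "b 0 = 0"
proof -
  have sm: "summable (\<lambda>n. b n * of_real (r/2) ^ n)" using s[of "r/2"] r sums_summable by auto
  have "isCont (PS b) 0" unfolding PS_def[abs_def]
    by (rule isCont_powser[OF sm]) (use r in simp)
  then have "((\<lambda>x. PS b (of_real x)) \<longlongrightarrow> PS b 0) (at_right (0::real))"
    by (intro isCont_tendsto_compose[of _ "PS b"]) (auto intro!: tendsto_eq_intros)
  moreover have "eventually (\<lambda>x. PS b (of_real x) = 0) (at_right (0::real))"
    unfolding eventually_at_right_field using r
    by (intro exI[of _ r]) (auto simp: PS_def intro: sums_unique[symmetric] s)
  ultimately have "((\<lambda>x. 0) \<longlongrightarrow> PS b 0) (at_right (0::real))"
    by (rule Lim_transform_eventually)
  then have "PS b 0 = 0" using tendsto_const_iff by (metis trivial_limit_at_right_real)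
  then show ?thesis by (simp add: PS_def)
qed

lemma ps_zero:
  fixes a :: "nat \<Rightarrow> complex"
  assumes r: "0 < r" and s: "\<And>x. 0 < x \<Longrightarrow> x < r \<Longrightarrow> (\<lambda>n. a n * of_real x ^ n) sums 0"
  shows "a n = 0"
proof (induction n rule: less_induct)
  case (less n)
  have "(\<lambda>i. a (i + n) * of_real x ^ i) sums 0" if x: "0 < x" "x < r" for x
  proof -
    have S0: "(\<lambda>i. a (i + n) * of_real x ^ (i + n)) sums 0"
      using sums_zero_iff_shift[of n "\<lambda>i. a i * of_real x ^ i" 0] less s[OF x] by simp
    have "(\<lambda>i. (1 / of_real x ^ n) * (a (i + n) * of_real x ^ (i + n))) sums 0"
      using sums_mult[OF S0, of "1 / of_real x ^ n"] by simp
    moreover have "(\<lambda>i. (1 / of_real x ^ n) * (a (i + n) * of_real x ^ (i + n))) =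
        (\<lambda>i. a (i + n) * of_real x ^ i)"
      using x by (auto simp: power_add field_simps)
    ultimately show ?thesis by simp
  qed
  from ps_zero_aux[OF r this] show ?case by simp
qed

definition shk :: "nat \<Rightarrow> (nat \<Rightarrow> complex) \<Rightarrow> nat \<Rightarrow> complex" where
  "shk k a n = (if n < k then 0 else a (n - k))"

lemma sums_shk:
  assumes "(\<lambda>n. a n * z ^ n) sums X"
  shows "(\<lambda>n. shk k a n * z ^ n) sums (z ^ k * X)"
proof -
  have "(\<lambda>n. z ^ k * (a n * z ^ n)) sums (z ^ k * X)" by (rule sums_mult[OF assms])
  moreover have "(\<lambda>n. z ^ k * (a n * z ^ n)) = (\<lambda>i. shk k a (i + k) * z ^ (i + k))"
    by (auto simp: shk_def power_add algebra_simps)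
  ultimately show ?thesis
    using sums_zero_iff_shift[of k "\<lambda>n. shk k a n * z ^ n"] by (simp add: shk_def)
qed

definition th :: "complex \<Rightarrow> (nat \<Rightarrow> complex) \<Rightarrow> nat \<Rightarrow> complex" where
  "th \<mu> a = (\<lambda>m. (\<mu> - of_nat m) * a m)"

definition qc :: "complex \<Rightarrow> complex \<Rightarrow> complex \<Rightarrow> complex \<Rightarrow> (nat \<Rightarrow> complex) \<Rightarrow> nat \<Rightarrow> complex" where
  "qc \<mu> \<kappa> s d \<Gamma> n =
     (let A = (\<lambda>m. ((\<mu> - of_nat m)^2 - \<kappa>) * \<Gamma> m); B = th \<mu> \<Gamma> in
      A n - shk 4 A n + s * B n + d * shk 2 B n + s * shk 4 B n)"

lemma conv_th: "conv a r \<Longrightarrow> conv (th \<mu> a) r"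
  unfolding th_def by (rule conv_theta)

lemma series_Rec:
  assumes cv: "conv \<Gamma> r" and r: "0 < r"
    and eq: "\<And>x. 0 < x \<Longrightarrow> x < r \<Longrightarrow>
      (1 - of_real x ^ 4) * (PS (th \<mu> (th \<mu> \<Gamma>)) (of_real x) - \<kappa> * PS \<Gamma> (of_real x))
      + (s + d * of_real x ^ 2 + s * of_real x ^ 4) * PS (th \<mu> \<Gamma>) (of_real x) = 0"
  shows "qc \<mu> \<kappa> s d \<Gamma> n = 0"
proof (rule ps_zero[OF r])
  fix x :: real assume x: "0 < x" "x < r"
  define z where "z = (of_real x :: complex)"
  have nz: "norm z < r" using x by (simp add: z_def)
  define A where "A = (\<lambda>m. ((\<mu> - of_nat m)^2 - \<kappa>) * \<Gamma> m)"
  define B where "B = th \<mu> \<Gamma>"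
  define X where "X = PS (th \<mu> (th \<mu> \<Gamma>)) z - \<kappa> * PS \<Gamma> z"
  define Y where "Y = PS B z"
  have s1: "(\<lambda>n. th \<mu> (th \<mu> \<Gamma>) n * z ^ n) sums PS (th \<mu> (th \<mu> \<Gamma>)) z"
    by (rule conv_sums[OF conv_th[OF conv_th[OF cv]] nz])
  have s2: "(\<lambda>n. \<kappa> * (\<Gamma> n * z ^ n)) sums (\<kappa> * PS \<Gamma> z)"
    by (rule sums_mult, rule conv_sums[OF cv nz])
  have sA: "(\<lambda>n. A n * z ^ n) sums X"
  proof -
    have "(\<lambda>n. th \<mu> (th \<mu> \<Gamma>) n * z ^ n - \<kappa> * (\<Gamma> n * z ^ n)) sums X"
      unfolding X_def by (rule sums_diff[OF s1 s2])
    moreover have "(\<lambda>n. th \<mu> (th \<mu> \<Gamma>) n * z ^ n - \<kappa> * (\<Gamma> n * z ^ n)) = (\<lambda>n. A n * z ^ n)"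
      by (auto simp: A_def th_def power2_eq_square algebra_simps)
    ultimately show ?thesis by simp
  qed
  have sB: "(\<lambda>n. B n * z ^ n) sums Y"
    unfolding Y_def B_def by (rule conv_sums[OF conv_th[OF cv] nz])
  have "(\<lambda>n. A n * z ^ n - shk 4 A n * z ^ n + s * (B n * z ^ n) + d * (shk 2 B n * z ^ n)
          + s * (shk 4 B n * z ^ n)) sums (X - z ^ 4 * X + s * Y + d * (z ^ 2 * Y) + s * (z ^ 4 * Y))"
    by (intro sums_add sums_diff sums_mult sA sB sums_shk)
  moreover have "X - z ^ 4 * X + s * Y + d * (z ^ 2 * Y) + s * (z ^ 4 * Y) = 0"
    using eq[OF x] unfolding X_def Y_def B_def z_def[symmetric] by (simp add: algebra_simps)
  moreover have "(\<lambda>n. A n * z ^ n - shk 4 A n * z ^ n + s * (B n * z ^ n) + d * (shk 2 B n * z ^ n)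
          + s * (shk 4 B n * z ^ n)) = (\<lambda>n. qc \<mu> \<kappa> s d \<Gamma> n * z ^ n)"
    by (auto simp: qc_def A_def B_def Let_def algebra_simps)
  ultimately show "(\<lambda>n. qc \<mu> \<kappa> s d \<Gamma> n * of_real x ^ n) sums 0" by (simp add: z_def)
qed


lemma CS_exp:
  fixes t :: real
  defines "x \<equiv> exp (- t)"
  shows "cosh t = (1/x + x) / 2" "sinh t = (1/x - x) / 2"
  unfolding x_def by (simp_all add: cosh_def sinh_def exp_minus field_simps)

lemma Rr_poly:
  fixes t :: real
  assumes t: "t > 0"
  defines "x \<equiv> exp (- t)"
  shows "Rr m1p m1m m2p t * (1 - x ^ 4) =
     real (m1p + m1m + 2 * m2p) + 2 * (real m1p - real m1m) * x ^ 2 + real (m1p + m1m + 2 * m2p) * x ^ 4"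
proof -
  have x0: "0 < x" unfolding x_def by simp
  have x1: "x < 1" unfolding x_def using t by simp
  have x2: "x ^ 2 < 1" using x0 x1 by (simp add: power_less_one_iff)
  have q1: "cosh t / sinh t = (1 + x^2) / (1 - x^2)"
    unfolding CS_exp[of t, folded x_def] using x0 x2 by (simp add: field_simps power2_eq_square)
  have q2: "sinh t / cosh t = (1 - x^2) / (1 + x^2)"
    using q1 by (metis inverse_divide)
  have e: "(1 - x ^ 4) = (1 - x^2) * (1 + x^2)" by (simp add: algebra_simps power2_eq_square power4_eq_xxxx)
  have d1: "1 - x^2 \<noteq> 0" using x2 by simp
  have d2: "1 + x^2 \<noteq> 0" by (smt (verit) zero_le_power2)
  have R: "Rr m1p m1m m2p t = real m1p * ((1 + x^2) / (1 - x^2)) + real m1m * ((1 - x^2) / (1 + x^2))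
      + real m2p * ((1 + x^2) / (1 - x^2) + (1 - x^2) / (1 + x^2))"
    unfolding Rr_def times_divide_eq_right[symmetric] q1 q2 by simp
  have alg: "(real m1p * ((1 + u) / (1 - u)) + real m1m * ((1 - u) / (1 + u))
      + real m2p * ((1 + u) / (1 - u) + (1 - u) / (1 + u))) * ((1 - u) * (1 + u))
      = real (m1p + m1m + 2 * m2p) + 2 * (real m1p - real m1m) * u + real (m1p + m1m + 2 * m2p) * u^2"
    if "1 - u \<noteq> 0" "1 + u \<noteq> 0" for u :: real
  proof -
    have a1: "(1 + u) / (1 - u) * ((1 - u) * (1 + u)) = (1 + u)^2"
      using that by (simp add: power2_eq_square)
    have a2: "(1 - u) / (1 + u) * ((1 - u) * (1 + u)) = (1 - u)^2"
      using that by (simp add: power2_eq_square)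
    have "(real m1p * ((1 + u) / (1 - u)) + real m1m * ((1 - u) / (1 + u))
      + real m2p * ((1 + u) / (1 - u) + (1 - u) / (1 + u))) * ((1 - u) * (1 + u))
      = real m1p * ((1 + u) / (1 - u) * ((1 - u) * (1 + u))) + real m1m * ((1 - u) / (1 + u) * ((1 - u) * (1 + u)))
      + real m2p * ((1 + u) / (1 - u) * ((1 - u) * (1 + u)) + (1 - u) / (1 + u) * ((1 - u) * (1 + u)))"
      by (simp only: distrib_left distrib_right mult.assoc)
    also have "\<dots> = real m1p * (1 + u)^2 + real m1m * (1 - u)^2 + real m2p * ((1 + u)^2 + (1 - u)^2)"
      unfolding a1 a2 ..
    also have "\<dots> = real (m1p + m1m + 2 * m2p) + 2 * (real m1p - real m1m) * u + real (m1p + m1m + 2 * m2p) * u^2"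
      by (simp add: algebra_simps power2_eq_square)
    finally show ?thesis .
  qed
  have x4: "x ^ 4 = (x^2)^2" by simp
  show ?thesis unfolding R e unfolding x4 by (rule alg[OF d1 d2])
qed

lemma ODE_series_Rec:
  assumes cv: "conv \<Gamma> r" and r0: "0 < r" and r1: "r \<le> 1"
    and ode: "\<And>t. exp (- t) < r \<Longrightarrow>
      Ser \<mu> (th \<mu> (th \<mu> \<Gamma>)) t + of_real (Rr m1p m1m m2p t) * Ser \<mu> (th \<mu> \<Gamma>) t = \<kappa> * Ser \<mu> \<Gamma> t"
  shows "qc \<mu> \<kappa> (of_nat (m1p + m1m + 2 * m2p)) (2 * (of_nat m1p - of_nat m1m)) \<Gamma> n = 0"
proof (rule series_Rec[OF cv r0])
  fix x :: real assume x: "0 < x" "x < r"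
  define t where "t = - ln x"
  have ex: "exp (- t) = x" using x by (simp add: t_def)
  have t0: "t > 0" using x r1 by (simp add: t_def)
  define z where "z = (of_real x :: complex)"
  define P2 where "P2 = PS (th \<mu> (th \<mu> \<Gamma>)) z"
  define P1 where "P1 = PS (th \<mu> \<Gamma>) z"
  define P0 where "P0 = PS \<Gamma> z"
  define E where "E = exp (\<mu> * of_real t)"
  have E0: "E \<noteq> 0" by (simp add: E_def)
  have "E * P2 + of_real (Rr m1p m1m m2p t) * (E * P1) = \<kappa> * (E * P0)"
    using ode[of t] x unfolding Ser_def ex by (simp add: E_def P2_def P1_def P0_def z_def)
  then have "E * (P2 + of_real (Rr m1p m1m m2p t) * P1 - \<kappa> * P0) = 0"
    by (simp add: algebra_simps)
  then have e1: "P2 + of_real (Rr m1p m1m m2p t) * P1 - \<kappa> * P0 = 0" using E0 by simp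
  have "Rr m1p m1m m2p t * (1 - x ^ 4) =
     real (m1p + m1m + 2 * m2p) + 2 * (real m1p - real m1m) * x ^ 2 + real (m1p + m1m + 2 * m2p) * x ^ 4"
    using Rr_poly[OF t0, of m1p m1m m2p] unfolding ex .
  then have e2: "of_real (Rr m1p m1m m2p t) * (1 - z ^ 4) =
     of_nat (m1p + m1m + 2 * m2p) + 2 * (of_nat m1p - of_nat m1m) * z ^ 2 + of_nat (m1p + m1m + 2 * m2p) * z ^ 4"
    unfolding z_def by (metis (mono_tags, lifting) of_real_1 of_real_add of_real_diff of_real_mult
        of_real_numeral of_real_of_nat_eq of_real_power)
  have "(1 - z ^ 4) * (P2 - \<kappa> * P0) + (of_nat (m1p + m1m + 2 * m2p) + 2 * (of_nat m1p - of_nat m1m) * z ^ 2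
      + of_nat (m1p + m1m + 2 * m2p) * z ^ 4) * P1 = (1 - z ^ 4) * (P2 + of_real (Rr m1p m1m m2p t) * P1 - \<kappa> * P0)"
    unfolding e2[symmetric] by (simp add: algebra_simps)
  also have "\<dots> = 0" using e1 by simp
  finally show "(1 - of_real x ^ 4) * (PS (th \<mu> (th \<mu> \<Gamma>)) (of_real x) - \<kappa> * PS \<Gamma> (of_real x)) +
         (of_nat (m1p + m1m + 2 * m2p) + 2 * (of_nat m1p - of_nat m1m) * of_real x ^ 2 +
          of_nat (m1p + m1m + 2 * m2p) * of_real x ^ 4) * PS (th \<mu> \<Gamma>) (of_real x) = 0"
    by (simp add: P2_def P1_def P0_def z_def)
qed

definition c0 :: "complex \<Rightarrow> complex \<Rightarrow> complex \<Rightarrow> nat \<Rightarrow> complex" where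
  "c0 \<mu> \<kappa> s n = (\<mu> - of_nat n)^2 - \<kappa> + s * (\<mu> - of_nat n)"
definition c2 :: "complex \<Rightarrow> complex \<Rightarrow> nat \<Rightarrow> complex" where
  "c2 \<mu> d n = d * (\<mu> - of_nat (n - 2))"
definition c4 :: "complex \<Rightarrow> complex \<Rightarrow> complex \<Rightarrow> nat \<Rightarrow> complex" where
  "c4 \<mu> \<kappa> s n = s * (\<mu> - of_nat (n - 4)) - ((\<mu> - of_nat (n - 4))^2 - \<kappa>)"

lemma qc_expand:
  "qc \<mu> \<kappa> s d \<Gamma> n = c0 \<mu> \<kappa> s n * \<Gamma> n + (if n < 2 then 0 else c2 \<mu> d n * \<Gamma> (n - 2))
     + (if n < 4 then 0 else c4 \<mu> \<kappa> s n * \<Gamma> (n - 4))"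
  unfolding qc_def c0_def c2_def c4_def shk_def th_def Let_def
  by (auto simp: algebra_simps)

lemma Rec_unique:
  assumes q1: "\<And>n. qc \<mu> \<kappa> s d \<Gamma> n = 0" and q2: "\<And>n. qc \<mu> \<kappa> s d \<Gamma>' n = 0"
    and g0: "\<Gamma> 0 = \<Gamma>' 0" and nz: "\<And>n. n \<ge> 1 \<Longrightarrow> c0 \<mu> \<kappa> s n \<noteq> 0"
  shows "\<Gamma> n = \<Gamma>' n"
proof (induction n rule: less_induct)
  case (less n)
  show ?case
  proof (cases "n = 0")
    case True then show ?thesis using g0 by simp
  next
    case False
    have e1: "(if n < 2 then 0 else c2 \<mu> d n * \<Gamma> (n - 2)) = (if n < 2 then 0 else c2 \<mu> d n * \<Gamma>' (n - 2))"
      using less False by auto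
    have e2: "(if n < 4 then 0 else c4 \<mu> \<kappa> s n * \<Gamma> (n - 4)) = (if n < 4 then 0 else c4 \<mu> \<kappa> s n * \<Gamma>' (n - 4))"
      using less False by auto
    define AB where "AB = (if n < 2 then 0 else c2 \<mu> d n * \<Gamma>' (n - 2)) + (if n < 4 then 0 else c4 \<mu> \<kappa> s n * \<Gamma>' (n - 4))"
    have h1: "c0 \<mu> \<kappa> s n * \<Gamma> n + AB = 0"
      using q1[of n] unfolding qc_expand e1 e2 AB_def by (simp only: add.assoc)
    have h2: "c0 \<mu> \<kappa> s n * \<Gamma>' n + AB = 0"
      using q2[of n] unfolding qc_expand AB_def by (simp only: add.assoc)
    have "c0 \<mu> \<kappa> s n * \<Gamma> n = c0 \<mu> \<kappa> s n * \<Gamma>' n"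
      using h1 h2 by (metis add_right_cancel)
    then show ?thesis using nz[of n] False by simp
  qed
qed

lemma eventually_quad:
  fixes q \<alpha> \<beta> \<gamma> \<delta> :: real
  assumes q: "q > 1" and nn: "\<alpha> \<ge> 0" "\<beta> \<ge> 0" "\<gamma> \<ge> 0" "\<delta> \<ge> 0"
  shows "\<exists>N. \<forall>n\<ge>N. real n ^ 2 + \<alpha> * real n + \<beta> \<le> q * (real n ^ 2 - \<gamma> * real n - \<delta>)"
proof -
  define K0 where "K0 = \<alpha> + q * \<gamma> + \<beta> + q * \<delta>"
  have K0: "K0 \<ge> 0" unfolding K0_def using q nn by simp
  define N where "N = nat \<lceil>K0 / (q - 1)\<rceil> + 1"
  have "real n ^ 2 + \<alpha> * real n + \<beta> \<le> q * (real n ^ 2 - \<gamma> * real n - \<delta>)" if n: "n \<ge> N" for n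
  proof -
    have n1: "real n \<ge> 1" using n unfolding N_def by simp
    have "real n \<ge> K0 / (q - 1)" using n unfolding N_def by linarith
    then have a: "(q - 1) * real n \<ge> K0" using q by (simp add: field_simps)
    have b: "(q - 1) * real n * real n \<ge> K0 * real n"
      using mult_right_mono[OF a, of "real n"] n1 by simp
    have c: "(\<beta> + q * \<delta>) * real n \<ge> \<beta> + q * \<delta>"
      using mult_left_mono[OF n1, of "\<beta> + q * \<delta>"] nn q by simp
    have "K0 * real n = (\<alpha> + q * \<gamma>) * real n + (\<beta> + q * \<delta>) * real n"
      unfolding K0_def by (simp add: algebra_simps)
    then have "(q - 1) * (real n * real n) \<ge> (\<alpha> + q * \<gamma>) * real n + (\<beta> + q * \<delta>)"
      using b c by (simp add: mult.assoc)
    then show ?thesis by (simp add: algebra_simps power2_eq_square)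
  qed
  then show ?thesis by blast
qed

lemma norm_c2_le: "norm (c2 \<mu> d n) \<le> norm d * (norm \<mu> + real n)"
proof -
  have "norm (\<mu> - of_nat (n - 2)) \<le> norm \<mu> + real n"
    using norm_triangle_ineq4[of \<mu> "of_nat (n - 2)"] by simp
  then show ?thesis unfolding c2_def norm_mult by (simp add: mult_left_mono)
qed

lemma norm_c4_le: "norm (c4 \<mu> \<kappa> s n) \<le> norm s * (norm \<mu> + real n) + (norm \<mu> + real n)^2 + norm \<kappa>"
proof -
  have a: "norm (\<mu> - of_nat (n - 4)) \<le> norm \<mu> + real n"
    using norm_triangle_ineq4[of \<mu> "of_nat (n - 4)"] by simp
  have "norm (c4 \<mu> \<kappa> s n) \<le> norm (s * (\<mu> - of_nat (n - 4))) + norm ((\<mu> - of_nat (n - 4))^2) + norm \<kappa>"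
  proof -
    have i1: "norm (s * (\<mu> - of_nat (n - 4)) - ((\<mu> - of_nat (n - 4))^2 - \<kappa>))
       \<le> norm (s * (\<mu> - of_nat (n - 4))) + norm ((\<mu> - of_nat (n - 4))^2 - \<kappa>)"
      by (rule norm_triangle_ineq4)
    have i2: "norm ((\<mu> - of_nat (n - 4))^2 - \<kappa>) \<le> norm ((\<mu> - of_nat (n - 4))^2) + norm \<kappa>"
      by (rule norm_triangle_ineq4)
    show ?thesis unfolding c4_def using i1 i2 by linarith
  qed
  also have "\<dots> \<le> norm s * (norm \<mu> + real n) + (norm \<mu> + real n)^2 + norm \<kappa>"
    unfolding norm_mult norm_power
    by (intro add_mono mult_left_mono power_mono a) auto
  finally show ?thesis .
qed

lemma norm_c0_ge: "norm (c0 \<mu> \<kappa> s n) \<ge> real n ^ 2 - norm (2 * \<mu> + s) * real n - norm (\<mu>^2 - \<kappa> + s * \<mu>)"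
proof -
  have e: "c0 \<mu> \<kappa> s n = of_nat n ^ 2 - (2 * \<mu> + s) * of_nat n + (\<mu>^2 - \<kappa> + s * \<mu>)"
    unfolding c0_def by (simp add: algebra_simps power2_eq_square)
  define X where "X = (2 * \<mu> + s) * of_nat n"
  define Y where "Y = \<mu>^2 - \<kappa> + s * \<mu>"
  have e2: "of_nat n ^ 2 = c0 \<mu> \<kappa> s n + X - Y" unfolding e X_def Y_def by simp
  have i1: "norm (c0 \<mu> \<kappa> s n + X - Y) \<le> norm (c0 \<mu> \<kappa> s n + X) + norm Y" by (rule norm_triangle_ineq4)
  have i2: "norm (c0 \<mu> \<kappa> s n + X) \<le> norm (c0 \<mu> \<kappa> s n) + norm X" by (rule norm_triangle_ineq)
  have "norm (of_nat n ^ 2 :: complex) \<le> norm (c0 \<mu> \<kappa> s n) + norm ((2 * \<mu> + s) * of_nat n) + norm (\<mu>^2 - \<kappa> + s * \<mu>)"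
    unfolding e2 using i1 i2 unfolding X_def Y_def by linarith
  then show ?thesis by (simp add: norm_mult norm_power)
qed


lemma Rec_conv:
  assumes rec: "\<And>n. qc \<mu> \<kappa> s d \<Gamma> n = 0"
  shows "conv \<Gamma> 1"
  unfolding conv_def
proof (intro allI impI)
  fix x :: real assume x: "0 < x \<and> x < 1"
  define q where "q = (1 + x) / (2 * x)"
  have q1: "q > 1" using x unfolding q_def by (simp add: field_simps)
  have qx: "q * x < 1" "q * x \<ge> 0" using x unfolding q_def by (simp_all add: field_simps)
  define M where "M = norm \<mu>"
  define \<alpha> where "\<alpha> = 2 * M + norm d + norm s"
  define \<beta> where "\<beta> = M^2 + (norm d + norm s) * M + norm \<kappa>"
  define \<gamma> where "\<gamma> = norm (2 * \<mu> + s)"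
  define \<delta> where "\<delta> = norm (\<mu>^2 - \<kappa> + s * \<mu>)"
  have M0: "M \<ge> 0" unfolding M_def by simp
  obtain N0 where N0: "\<And>n. n \<ge> N0 \<Longrightarrow> real n ^ 2 + \<alpha> * real n + \<beta> \<le> q * (real n ^ 2 - \<gamma> * real n - \<delta>)"
    using eventually_quad[OF q1, of \<alpha> \<beta> \<gamma> \<delta>] M0 unfolding \<alpha>_def \<beta>_def \<gamma>_def \<delta>_def by auto
  define N where "N = max N0 4"
  define K where "K = (\<Sum>m<N. norm (\<Gamma> m))"
  have K0: "K \<ge> 0" unfolding K_def by (simp add: sum_nonneg)
  have bound: "norm (\<Gamma> n) \<le> K * q ^ n" for n
  proof (induction n rule: less_induct)
    case (less n)
    show ?case
    proof (cases "n < N")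
      case True
      have "norm (\<Gamma> n) \<le> K" unfolding K_def
        by (rule member_le_sum) (use True in auto)
      also have "K \<le> K * q ^ n" using K0 q1 by (simp add: mult_le_cancel_left1 one_le_power)
      finally show ?thesis .
    next
      case False
      then have n4: "n \<ge> 4" and nN0: "n \<ge> N0" unfolding N_def by auto
      let ?c0 = "c0 \<mu> \<kappa> s n" and ?c2 = "c2 \<mu> d n" and ?c4 = "c4 \<mu> \<kappa> s n"
      have "?c0 * \<Gamma> n + ?c2 * \<Gamma> (n - 2) + ?c4 * \<Gamma> (n - 4) = 0"
        using rec[of n] n4 unfolding qc_expand by simp
      then have "?c0 * \<Gamma> n = - (?c2 * \<Gamma> (n - 2) + ?c4 * \<Gamma> (n - 4))"
        by (subst eq_neg_iff_add_eq_0) (simp add: add.assoc)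
      then have "norm ?c0 * norm (\<Gamma> n) = norm (?c2 * \<Gamma> (n - 2) + ?c4 * \<Gamma> (n - 4))"
        by (metis norm_minus_cancel norm_mult)
      also have "\<dots> \<le> norm ?c2 * norm (\<Gamma> (n - 2)) + norm ?c4 * norm (\<Gamma> (n - 4))"
        by (metis norm_mult norm_triangle_ineq)
      also have "\<dots> \<le> norm ?c2 * (K * q ^ (n - 1)) + norm ?c4 * (K * q ^ (n - 1))"
      proof (intro add_mono mult_left_mono)
        have "norm (\<Gamma> (n - 2)) \<le> K * q ^ (n - 2)" using less[of "n - 2"] n4 by simp
        also have "\<dots> \<le> K * q ^ (n - 1)" using K0 q1 n4
          by (intro mult_left_mono power_increasing) auto
        finally show "norm (\<Gamma> (n - 2)) \<le> K * q ^ (n - 1)" .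
        have "norm (\<Gamma> (n - 4)) \<le> K * q ^ (n - 4)" using less[of "n - 4"] n4 by simp
        also have "\<dots> \<le> K * q ^ (n - 1)" using K0 q1 n4
          by (intro mult_left_mono power_increasing) auto
        finally show "norm (\<Gamma> (n - 4)) \<le> K * q ^ (n - 1)" .
      qed auto
      also have "\<dots> = (norm ?c2 + norm ?c4) * (K * q ^ (n - 1))" by (simp add: algebra_simps)
      also have "\<dots> \<le> (real n ^ 2 + \<alpha> * real n + \<beta>) * (K * q ^ (n - 1))"
      proof (rule mult_right_mono)
        have "norm ?c2 + norm ?c4 \<le> norm d * (M + real n) + (norm s * (M + real n) + (M + real n)^2 + norm \<kappa>)"
          using norm_c2_le[where \<mu>=\<mu> and d=d and n=n] norm_c4_le[where \<mu>=\<mu> and \<kappa>=\<kappa> and s=s and n=n] unfolding M_def by linarith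
        also have "\<dots> = real n ^ 2 + \<alpha> * real n + \<beta>"
          unfolding \<alpha>_def \<beta>_def by (simp add: algebra_simps power2_eq_square)
        finally show "norm ?c2 + norm ?c4 \<le> real n ^ 2 + \<alpha> * real n + \<beta>" .
      qed (use K0 q1 in simp)
      also have "\<dots> \<le> q * norm ?c0 * (K * q ^ (n - 1))"
      proof (rule mult_right_mono)
        have "real n ^ 2 - \<gamma> * real n - \<delta> \<le> norm ?c0"
          using norm_c0_ge[where \<mu>=\<mu> and \<kappa>=\<kappa> and s=s and n=n] unfolding \<gamma>_def \<delta>_def by simp
        then have "q * (real n ^ 2 - \<gamma> * real n - \<delta>) \<le> q * norm ?c0"
          using q1 by (intro mult_left_mono) auto
        then show "real n ^ 2 + \<alpha> * real n + \<beta> \<le> q * norm ?c0" using N0[OF nN0] by linarith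
      qed (use K0 q1 in simp)
      also have "\<dots> = norm ?c0 * (K * q ^ n)"
      proof -
        have "q * q ^ (n - 1) = q ^ n" using n4 by (metis Suc_diff_1 less_le_trans not_less numeral_less_iff
              power_Suc semiring_norm(68) zero_less_numeral zero_less_one)
        then show ?thesis by (metis mult.assoc mult.left_commute)
      qed
      finally have le: "norm ?c0 * norm (\<Gamma> n) \<le> norm ?c0 * (K * q ^ n)" .
      have "real n ^ 2 \<ge> 1" using n4 by (simp add: one_le_power)
      moreover have "\<alpha> \<ge> 0" "\<beta> \<ge> 0" unfolding \<alpha>_def \<beta>_def using M0 by auto
      ultimately have "q * (real n ^ 2 - \<gamma> * real n - \<delta>) > 0" using N0[OF nN0]
        by (smt (verit) of_nat_0_le_iff mult_nonneg_nonneg)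
      then have "real n ^ 2 - \<gamma> * real n - \<delta> > 0" using q1 by (simp add: zero_less_mult_iff)
      then have "norm ?c0 > 0" using norm_c0_ge[where \<mu>=\<mu> and \<kappa>=\<kappa> and s=s and n=n] unfolding \<gamma>_def \<delta>_def by linarith
      then show ?thesis using le by simp
    qed
  qed
  show "summable (\<lambda>m. \<Gamma> m * of_real x ^ m)"
  proof (rule summable_comparison_test')
    show "summable (\<lambda>n. K * (q * x) ^ n)"
      by (rule summable_mult, rule summable_geometric) (use qx in simp)
    fix n :: nat assume "n \<ge> 0"
    have "norm (\<Gamma> n * of_real x ^ n) = norm (\<Gamma> n) * x ^ n"
      using x by (simp add: norm_mult norm_power)
    also have "\<dots> \<le> K * q ^ n * x ^ n"
      using bound[of n] x by (intro mult_right_mono) auto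
    also have "\<dots> = K * (q * x) ^ n" by (simp add: power_mult_distrib)
    finally show "norm (\<Gamma> n * of_real x ^ n) \<le> K * (q * x) ^ n" .
  qed
qed

definition hc :: "complex \<Rightarrow> complex \<Rightarrow> complex \<Rightarrow> nat \<Rightarrow> complex" where
  "hc a b c n = pochhammer a n * pochhammer b n / (pochhammer c n * fact n)"

lemma hyp2F1_PS: "hyp2F1 a b c = PS (hc a b c)"
  unfolding hyp2F1_def PS_def hc_def by simp

lemma hc_0 [simp]: "hc a b c 0 = 1" by (simp add: hc_def)

lemma hc_Suc: "hc a b c (Suc n) = hc a b c n * ((a + of_nat n) * (b + of_nat n) / ((c + of_nat n) * of_nat (Suc n)))"
  unfolding hc_def pochhammer_Suc fact_Suc by (simp add: field_simps)

lemma div_cancel_aux: "(D::complex) \<noteq> 0 \<Longrightarrow> D * (h * (X / D)) = X * h"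
  by (simp add: field_simps)

lemma hc_rec:
  assumes "c + of_nat n \<noteq> 0"
  shows "(of_nat n + 1) * (of_nat n + c) * hc a b c (Suc n) = (of_nat n + a) * (of_nat n + b) * hc a b c n"
proof -
  have d0: "of_nat (Suc n) \<noteq> (0::complex)" by (rule of_nat_neq_0)
  have d: "(c + of_nat n) * of_nat (Suc n) \<noteq> (0::complex)" using assms d0 by (simp only: mult_eq_0_iff) simp
  have e: "(of_nat n + 1) * (of_nat n + c) = (c + of_nat n) * (of_nat (Suc n) :: complex)"
    by (simp add: algebra_simps)
  have "(c + of_nat n) * of_nat (Suc n) * hc a b c (Suc n) = (a + of_nat n) * (b + of_nat n) * hc a b c n"
    unfolding hc_Suc by (rule div_cancel_aux[OF d])
  then show ?thesis unfolding e by (simp add: add.commute)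
qed

lemma hc_conv: "conv (hc a b c) 1"
  unfolding conv_def
proof (intro allI impI)
  fix x :: real assume x: "0 < x \<and> x < 1"
  define q where "q = (1 + x) / (2 * x)"
  have q1: "q > 1" using x unfolding q_def by (simp add: field_simps)
  have qx: "q * x < 1" using x unfolding q_def by (simp add: field_simps)
  obtain N where N: "\<And>n. n \<ge> N \<Longrightarrow> real n ^ 2 + (norm a + norm b) * real n + norm a * norm b
      \<le> q * (real n ^ 2 - norm c * real n - norm c)"
    using eventually_quad[OF q1, of "norm a + norm b" "norm a * norm b" "norm c" "norm c"] by auto
  show "summable (\<lambda>m. hc a b c m * of_real x ^ m)"
  proof (rule summable_ratio_test[of "q * x" "max N 1"])
    show "q * x < 1" by (rule qx)
    fix n assume n: "n \<ge> max N 1"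
    then have nN: "n \<ge> N" and n1: "real n \<ge> 1" by auto
    have "norm (of_nat (Suc n) :: complex) = real (Suc n)" by (rule norm_of_nat)
    then have nS: "norm (1 + of_nat n :: complex) = 1 + real n" by (simp only: of_nat_Suc)
    have sq: "real n ^ 2 \<ge> 1" using n1 by (simp add: one_le_power)
    have pos: "real n ^ 2 - norm c * real n - norm c > 0"
    proof -
      have "(norm a + norm b) * real n \<ge> 0" "norm a * norm b \<ge> 0" by auto
      then have "q * (real n ^ 2 - norm c * real n - norm c) \<ge> 1"
        using N[OF nN] sq by linarith
      then have "q * (real n ^ 2 - norm c * real n - norm c) > 0" by linarith
      then show ?thesis using q1 by (simp add: zero_less_mult_iff)
    qed
    have den: "norm (c + of_nat n) * real (Suc n) \<ge> real n ^ 2 - norm c * real n - norm c"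
    proof -
      have "norm (c + of_nat n) \<ge> real n - norm c"
        using norm_triangle_ineq2[of "of_nat n" "-c"] by (simp add: add.commute)
      moreover have "real n - norm c \<ge> 0"
      proof (rule ccontr)
        assume "\<not> real n - norm c \<ge> 0"
        then have "norm c * real n \<ge> real n * real n" using n1 by (simp add: mult_right_mono)
        then show False using pos norm_ge_zero[of c] by (simp add: power2_eq_square)
      qed
      ultimately have "norm (c + of_nat n) * real (Suc n) \<ge> (real n - norm c) * real (Suc n)"
        by (intro mult_right_mono) auto
      also have "(real n - norm c) * real (Suc n) \<ge> real n ^ 2 - norm c * real n - norm c"
        by (simp add: algebra_simps power2_eq_square)
      finally show ?thesis by simp
    qed
    have num: "norm ((a + of_nat n) * (b + of_nat n)) \<le> real n ^ 2 + (norm a + norm b) * real n + norm a * norm b"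
    proof -
      have ta: "norm (a + of_nat n) \<le> norm a + real n"
        using norm_triangle_ineq[of a "of_nat n"] by simp
      have tb: "norm (b + of_nat n) \<le> norm b + real n"
        using norm_triangle_ineq[of b "of_nat n"] by simp
      have "norm ((a + of_nat n) * (b + of_nat n)) \<le> (norm a + real n) * (norm b + real n)"
        unfolding norm_mult by (rule mult_mono[OF ta tb]) auto
      also have "\<dots> = real n ^ 2 + (norm a + norm b) * real n + norm a * norm b"
        by (simp add: algebra_simps power2_eq_square)
      finally show ?thesis .
    qed
    have ratio: "norm ((a + of_nat n) * (b + of_nat n) / ((c + of_nat n) * of_nat (Suc n))) \<le> q"
    proof -
      have dpos: "norm (c + of_nat n) * real (Suc n) > 0" using den pos by linarith
      have "norm ((a + of_nat n) * (b + of_nat n) / ((c + of_nat n) * of_nat (Suc n)))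
          = norm ((a + of_nat n) * (b + of_nat n)) / (norm (c + of_nat n) * real (Suc n))"
        using nS by (simp add: norm_divide norm_mult)
      also have "\<dots> \<le> q"
      proof (subst pos_divide_le_eq[OF dpos])
        have "q * (real n ^ 2 - norm c * real n - norm c) \<le> q * (norm (c + of_nat n) * real (Suc n))"
          using den q1 by (intro mult_left_mono) auto
        then show "norm ((a + of_nat n) * (b + of_nat n)) \<le> q * (norm (c + of_nat n) * real (Suc n))"
          using num N[OF nN] by linarith
      qed
      finally show ?thesis .
    qed
    have "norm (hc a b c (Suc n) * of_real x ^ Suc n)
       = norm ((a + of_nat n) * (b + of_nat n) / ((c + of_nat n) * of_nat (Suc n))) * x * norm (hc a b c n * of_real x ^ n)"
    proof -
      define R where "R = (a + of_nat n) * (b + of_nat n) / ((c + of_nat n) * of_nat (Suc n))"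
      have "hc a b c (Suc n) * of_real x ^ Suc n = R * of_real x * (hc a b c n * of_real x ^ n)"
        unfolding hc_Suc R_def[symmetric] by (simp only: power_Suc mult_ac)
      then have "norm (hc a b c (Suc n) * of_real x ^ Suc n) = norm R * x * norm (hc a b c n * of_real x ^ n)"
        using x by (simp only: norm_mult norm_of_real) simp
      then show ?thesis unfolding R_def .
    qed
    also have "\<dots> \<le> q * x * norm (hc a b c n * of_real x ^ n)"
      using ratio x by (intro mult_right_mono) auto
    finally show "norm (hc a b c (Suc n) * of_real x ^ Suc n) \<le> q * x * norm (hc a b c n * of_real x ^ n)" .
  qed
qed

lemma hyp_coef:
  fixes a b c :: complex
  defines "h \<equiv> hc a b c"
  shows "shk 1 (diffs (diffs h)) n - shk 2 (diffs (diffs h)) n + c * diffs h n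
     - (a + b + 1) * shk 1 (diffs h) n - a * b * h n
     = (of_nat n + 1) * (of_nat n + c) * h (Suc n) - (of_nat n + a) * (of_nat n + b) * h n"
proof (cases n)
  case 0
  then show ?thesis by (simp add: shk_def diffs_def algebra_simps)
next
  case (Suc m)
  show ?thesis
  proof (cases m)
    case 0
    then show ?thesis using Suc by (simp add: shk_def diffs_def algebra_simps)
  next
    case (Suc k)
    then show ?thesis using \<open>n = Suc m\<close> by (simp add: shk_def diffs_def algebra_simps)
  qed
qed

lemma hyp_ode:
  fixes a b c w :: complex
  assumes c: "\<And>n. c + of_nat n \<noteq> 0" and w: "norm w < 1"
  shows "w * (1 - w) * PS (diffs (diffs (hc a b c))) w + (c - (a + b + 1) * w) * PS (diffs (hc a b c)) w
          - a * b * PS (hc a b c) w = 0"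
proof -
  define h where "h = hc a b c"
  have cv0: "conv h 1" unfolding h_def by (rule hc_conv)
  have cv1: "conv (diffs h) 1" by (rule conv_diffs[OF cv0])
  have cv2: "conv (diffs (diffs h)) 1" by (rule conv_diffs[OF cv1])
  have s0: "(\<lambda>n. h n * w ^ n) sums PS h w" by (rule conv_sums[OF cv0 w])
  have s1: "(\<lambda>n. diffs h n * w ^ n) sums PS (diffs h) w" by (rule conv_sums[OF cv1 w])
  have s2: "(\<lambda>n. diffs (diffs h) n * w ^ n) sums PS (diffs (diffs h)) w" by (rule conv_sums[OF cv2 w])
  have "(\<lambda>n. shk 1 (diffs (diffs h)) n * w ^ n - shk 2 (diffs (diffs h)) n * w ^ n + c * (diffs h n * w ^ n)
     - (a + b + 1) * (shk 1 (diffs h) n * w ^ n) - a * b * (h n * w ^ n)) sums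
     (w ^ 1 * PS (diffs (diffs h)) w - w ^ 2 * PS (diffs (diffs h)) w + c * PS (diffs h) w
      - (a + b + 1) * (w ^ 1 * PS (diffs h) w) - a * b * PS h w)"
    by (intro sums_add sums_diff sums_mult sums_shk s0 s1 s2)
  note S = this
  have Z: "(\<lambda>n. shk 1 (diffs (diffs h)) n * w ^ n - shk 2 (diffs (diffs h)) n * w ^ n + c * (diffs h n * w ^ n)
     - (a + b + 1) * (shk 1 (diffs h) n * w ^ n) - a * b * (h n * w ^ n)) = (\<lambda>n. 0)"
  proof
    fix n
    have "shk 1 (diffs (diffs h)) n - shk 2 (diffs (diffs h)) n + c * diffs h n
     - (a + b + 1) * shk 1 (diffs h) n - a * b * h n = 0"
      unfolding h_def hyp_coef using hc_rec[OF c[of n], of a b] by simp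
    then have "(shk 1 (diffs (diffs h)) n - shk 2 (diffs (diffs h)) n + c * diffs h n
     - (a + b + 1) * shk 1 (diffs h) n - a * b * h n) * w ^ n = 0" by simp
    then show "shk 1 (diffs (diffs h)) n * w ^ n - shk 2 (diffs (diffs h)) n * w ^ n + c * (diffs h n * w ^ n)
     - (a + b + 1) * (shk 1 (diffs h) n * w ^ n) - a * b * (h n * w ^ n) = 0"
      by (simp add: algebra_simps)
  qed
  have "(w ^ 1 * PS (diffs (diffs h)) w - w ^ 2 * PS (diffs (diffs h)) w + c * PS (diffs h) w
      - (a + b + 1) * (w ^ 1 * PS (diffs h) w) - a * b * PS h w) = 0"
    using sums_unique2[OF S[unfolded Z] sums_zero] .
  then show ?thesis unfolding h_def by (simp add: algebra_simps power2_eq_square)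
qed

lemma key_alg:
  fixes T F F1 F2 lam p q u :: complex
  shows "(lam - (p + q + 2*u)/2) * (T * (- 2 * T * (1 - T^2) * F1) + (1 - T^2) * F)
       - 2 * (T * (1 - T^2) * (- 2 * T * (1 - T^2) * F2) + ((1 - T^2) * (1 - T^2) - 2 * T * T * (1 - T^2)) * F1)
     + (lam - (p + q + 2*u)/2) * T * ((lam - (p + q + 2*u)/2) * T * F - 2 * (T * (1 - T^2)) * F1)
     + (p + q * T^2 + u * (1 + T^2)) * ((lam - (p + q + 2*u)/2) * F - 2 * (1 - T^2) * F1)
     - (lam^2 - ((p + q + 2*u)/2)^2) * F
   = 4 * (1 - T^2) * ((1 - T^2) * (1 - (1 - T^2)) * F2
       + ((1 - lam) - (((p + q + 2*u)/2 - lam)/2 + (- ((p + q + 2*u)/2) - lam + 1 + p + u)/2 + 1) * (1 - T^2)) * F1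
       - ((p + q + 2*u)/2 - lam)/2 * ((- ((p + q + 2*u)/2) - lam + 1 + p + u)/2) * F)"
  by (simp add: field_simps power2_eq_square)

lemma vd_eq: "(f has_vector_derivative a) F \<Longrightarrow> a = b \<Longrightarrow> (f has_vector_derivative b) F"
  by simp

locale HS =
  fixes m1p m1m m2p :: nat and lam :: complex
  assumes lam_ok: "\<forall>n::nat. lam \<noteq> of_nat n / 2"
begin

definition "\<rho> = rho_mult m1p m1m m2p 0"
definition "\<mu> = lam - of_real \<rho>"
definition "\<kappa> = lam\<^sup>2 - (of_real \<rho>)\<^sup>2"
definition "ha = (of_real \<rho> - lam) / 2"
definition "hb = (- of_real \<rho> - lam + 1 + of_nat m1p + of_nat m2p) / 2"
definition "hcc = 1 - lam"
definition "hF = PS (hc ha hb hcc)"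
definition "hF1 = PS (diffs (hc ha hb hcc))"
definition "hF2 = PS (diffs (diffs (hc ha hb hcc)))"
definition "Ew (s::real) = exp (\<mu> * of_real (ln (2 * cosh s)))"
definition "ww (s::real) = 1 / (cosh s)\<^sup>2"
definition "TT (s::real) = sinh s / cosh s"
definition "W (s::real) = (of_real (ww s) :: complex)"
definition "P0 (s::real) = Ew s * hF (W s)"
definition "GG (s::real) = \<mu> * of_real (TT s) * hF (W s) - 2 * of_real (TT s * ww s) * hF1 (W s)"
definition "P1 (s::real) = Ew s * GG s"
definition "GG' (s::real) = \<mu> * (of_real (TT s) * (of_real (- 2 * TT s * ww s) * hF1 (W s)) + of_real (ww s) * hF (W s))
   - 2 * (of_real (TT s * ww s) * (of_real (- 2 * TT s * ww s) * hF2 (W s))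
          + of_real (ww s * ww s - 2 * TT s * TT s * ww s) * hF1 (W s))"
definition "P2 (s::real) = Ew s * GG' s + \<mu> * of_real (TT s) * Ew s * GG s"

lemma hcc_ok: "hcc + of_nat n \<noteq> 0"
proof
  assume a: "hcc + of_nat n = 0"
  have "lam = lam + (hcc + of_nat n)" using a by simp
  also have "\<dots> = 1 + of_nat n" unfolding hcc_def by simp
  also have "\<dots> = of_nat (2 * (n + 1)) / 2" by simp
  finally show False using lam_ok by blast
qed

lemma Phi0_eq: "Phi0 m1p m1m m2p 0 lam s = P0 s"
proof -
  have c: "2 * cosh s > 0" by simp
  have nz: "complex_of_real (2 * cosh s) = 0 \<longleftrightarrow> False" using c by simp
  have "complex_of_real (2 * cosh s) powr (lam - of_real \<rho>)
      = exp ((lam - of_real \<rho>) * ln (complex_of_real (2 * cosh s)))"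
    unfolding powr_def by (simp only: nz if_False)
  also have "\<dots> = Ew s" unfolding Ew_def \<mu>_def Ln_of_real[OF c] by (simp add: mult.commute)
  finally have "complex_of_real (2 * cosh s) powr (lam - of_real \<rho>) = Ew s" .
  then show ?thesis
    unfolding Phi0_def P0_def Let_def hyp2F1_PS hF_def W_def ww_def ha_def hb_def hcc_def \<rho>_def
    by simp
qed

lemma ww_pos: "ww s > 0" unfolding ww_def using cosh_real_pos[of s] by simp
lemma ww_lt1: "s > 0 \<Longrightarrow> ww s < 1"
proof -
  assume "s > 0"
  then have "cosh s > 1" using cosh_real_ge_1[of s] cosh_real_one_iff[of s] by linarith
  then have "(cosh s)\<^sup>2 > 1" by (simp add: one_less_power)
  then show "ww s < 1" unfolding ww_def by simp
qed
lemma norm_W: "s > 0 \<Longrightarrow> norm (W s) < 1"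
  using ww_pos[of s] ww_lt1[of s] unfolding W_def by simp

lemma d_ln: "((\<lambda>s. ln (2 * cosh s)) has_real_derivative TT s) (at s)"
proof -
  have "cosh s > 0" by simp
  then show ?thesis unfolding TT_def
    by (auto intro!: derivative_eq_intros)
qed

lemma d_ww: "(ww has_real_derivative (- 2 * TT s * ww s)) (at s)"
proof -
  have c: "cosh s \<noteq> 0" by simp
  show ?thesis unfolding ww_def[abs_def] TT_def
    by (auto intro!: derivative_eq_intros simp: field_simps power2_eq_square power3_eq_cube)
qed

lemma d_TT: "(TT has_real_derivative ww s) (at s)"
proof -
  have c: "cosh s \<noteq> 0" by simp
  have e: "cosh s * cosh s - sinh s * sinh s = 1" using hyperbolic_pythagoras[of s] by (simp add: power2_eq_square)
  show ?thesis unfolding ww_def TT_def[abs_def]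
    by (auto intro!: derivative_eq_intros simp: field_simps power2_eq_square e)
qed


lemma vd_Ew: "(Ew has_vector_derivative (\<mu> * of_real (TT s) * Ew s)) (at s)"
proof -
  have "((\<lambda>z. exp (\<mu> * z)) has_field_derivative (\<mu> * exp (\<mu> * of_real (ln (2 * cosh s))))) (at (of_real (ln (2 * cosh s))))"
    by (auto intro!: derivative_eq_intros)
  from vd_comp[OF d_ln this] show ?thesis
    unfolding Ew_def[abs_def] by (simp add: mult_ac)
qed

lemma vd_F: "s > 0 \<Longrightarrow> ((\<lambda>s. hF (W s)) has_vector_derivative (of_real (- 2 * TT s * ww s) * hF1 (W s))) (at s)"
  unfolding W_def hF_def hF1_def
  by (rule vd_comp[OF d_ww], rule PS_deriv[OF hc_conv]) (use norm_W[of s] in \<open>simp add: W_def\<close>)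

lemma vd_F1: "s > 0 \<Longrightarrow> ((\<lambda>s. hF1 (W s)) has_vector_derivative (of_real (- 2 * TT s * ww s) * hF2 (W s))) (at s)"
  unfolding W_def hF1_def hF2_def
  by (rule vd_comp[OF d_ww], rule PS_deriv[OF conv_diffs[OF hc_conv]]) (use norm_W[of s] in \<open>simp add: W_def\<close>)

lemma vd_TT: "((\<lambda>s. of_real (TT s) :: complex) has_vector_derivative of_real (ww s)) (at s)"
  by (rule has_vector_derivative_of_real[OF d_TT])

lemma vd_TTww: "((\<lambda>s. of_real (TT s * ww s) :: complex) has_vector_derivative
     of_real (ww s * ww s - 2 * TT s * TT s * ww s)) (at s)"
proof -
  have "((\<lambda>s. TT s * ww s) has_real_derivative (TT s * (- 2 * TT s * ww s) + ww s * ww s)) (at s)"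
    by (rule DERIV_mult'[OF d_TT d_ww, THEN DERIV_cong]) (simp add: algebra_simps)
  then have "((\<lambda>s. TT s * ww s) has_real_derivative (ww s * ww s - 2 * TT s * TT s * ww s)) (at s)"
    by (simp add: algebra_simps)
  then show ?thesis by (rule has_vector_derivative_of_real)
qed

lemma vd_P0: "s > 0 \<Longrightarrow> (P0 has_vector_derivative P1 s) (at s)"
  unfolding P0_def[abs_def]
  by (rule vd_eq[OF has_vector_derivative_mult[OF vd_Ew vd_F]]) (simp_all add: P1_def GG_def algebra_simps)

lemma vd_GG: "s > 0 \<Longrightarrow> (GG has_vector_derivative GG' s) (at s)"
proof -
  assume s: "s > 0"
  have a: "((\<lambda>s. \<mu> * (of_real (TT s) * hF (W s))) has_vector_derivative
       \<mu> * (of_real (TT s) * (of_real (- 2 * TT s * ww s) * hF1 (W s)) + of_real (ww s) * hF (W s))) (at s)"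
    by (rule vd_eq[OF has_vector_derivative_mult[OF has_vector_derivative_const has_vector_derivative_mult[OF vd_TT vd_F[OF s]]]]) simp
  have b: "((\<lambda>s. 2 * (of_real (TT s * ww s) * hF1 (W s))) has_vector_derivative
       2 * (of_real (TT s * ww s) * (of_real (- 2 * TT s * ww s) * hF2 (W s))
          + of_real (ww s * ww s - 2 * TT s * TT s * ww s) * hF1 (W s))) (at s)"
    by (rule vd_eq[OF has_vector_derivative_mult[OF has_vector_derivative_const has_vector_derivative_mult[OF vd_TTww vd_F1[OF s]]]]) simp
  have "((\<lambda>s. \<mu> * (of_real (TT s) * hF (W s)) - 2 * (of_real (TT s * ww s) * hF1 (W s))) has_vector_derivative GG' s) (at s)"
    unfolding GG'_def by (rule has_vector_derivative_diff[OF a b])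
  moreover have "(\<lambda>s. \<mu> * (of_real (TT s) * hF (W s)) - 2 * (of_real (TT s * ww s) * hF1 (W s))) = GG"
    by (rule ext) (simp add: GG_def mult.assoc)
  ultimately show ?thesis by simp
qed

lemma vd_P1: "s > 0 \<Longrightarrow> (P1 has_vector_derivative P2 s) (at s)"
  unfolding P1_def[abs_def]
  by (rule vd_eq[OF has_vector_derivative_mult[OF vd_Ew vd_GG]]) (simp_all add: P2_def)


lemma P_ode:
  assumes s: "s > 0"
  shows "P2 s + of_real (Rr m1p m1m m2p s) * P1 s = \<kappa> * P0 s"
proof -
  define T where "T = (of_real (TT s) :: complex)"
  have sh: "sinh s > 0" using s by simp
  have ch: "cosh s > 0" by simp
  have T0: "T \<noteq> 0" unfolding T_def TT_def using sh ch by simp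
  have e: "cosh s * cosh s - sinh s * sinh s = 1" using hyperbolic_pythagoras[of s] by (simp add: power2_eq_square)
  have "1 - (TT s)^2 = (cosh s * cosh s - sinh s * sinh s) / (cosh s * cosh s)"
    unfolding TT_def using ch by (simp add: field_simps power2_eq_square)
  then have wr: "ww s = 1 - (TT s)^2" unfolding e ww_def by (simp add: power2_eq_square)
  have w: "W s = 1 - T^2" unfolding W_def T_def wr by simp
  have w': "(of_real (ww s) :: complex) = 1 - T^2" using w unfolding W_def .
  have Rr: "Rr m1p m1m m2p s = (real m1p + real m1m * (TT s)^2 + real m2p * (1 + (TT s)^2)) / TT s"
    unfolding Rr_def TT_def using sh ch by (simp add: field_simps power2_eq_square)
  have R: "(of_real (Rr m1p m1m m2p s) :: complex) = (of_nat m1p + of_nat m1m * T^2 + of_nat m2p * (1 + T^2)) / T"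
    unfolding Rr T_def by simp
  have rho: "(of_real \<rho> :: complex) = (of_nat m1p + of_nat m1m + 2 * of_nat m2p) / 2"
    unfolding \<rho>_def rho_mult_def by simp
  have hyp: "W s * (1 - W s) * hF2 (W s) + (hcc - (ha + hb + 1) * W s) * hF1 (W s) - ha * hb * hF (W s) = 0"
    unfolding hF_def hF1_def hF2_def by (rule hyp_ode[OF hcc_ok norm_W[OF s]])
  define F where "F = hF (W s)"
  define F1 where "F1 = hF1 (W s)"
  define F2 where "F2 = hF2 (W s)"
  have hyp': "(1 - T^2) * (1 - (1 - T^2)) * F2
       + ((1 - lam) - (((of_nat m1p + of_nat m1m + 2 * of_nat m2p)/2 - lam)/2
          + (- ((of_nat m1p + of_nat m1m + 2 * of_nat m2p)/2) - lam + 1 + of_nat m1p + of_nat m2p)/2 + 1) * (1 - T^2)) * F1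
       - ((of_nat m1p + of_nat m1m + 2 * of_nat m2p)/2 - lam)/2
          * ((- ((of_nat m1p + of_nat m1m + 2 * of_nat m2p)/2) - lam + 1 + of_nat m1p + of_nat m2p)/2) * F = 0"
    using hyp unfolding F_def[symmetric] F1_def[symmetric] F2_def[symmetric] unfolding w hcc_def ha_def hb_def rho .
  have "P2 s + of_real (Rr m1p m1m m2p s) * P1 s - \<kappa> * P0 s =
     Ew s * ((lam - (of_nat m1p + of_nat m1m + 2 * of_nat m2p)/2) * (T * (- 2 * T * (1 - T^2) * F1) + (1 - T^2) * F)
       - 2 * (T * (1 - T^2) * (- 2 * T * (1 - T^2) * F2) + ((1 - T^2) * (1 - T^2) - 2 * T * T * (1 - T^2)) * F1)
     + (lam - (of_nat m1p + of_nat m1m + 2 * of_nat m2p)/2) * T * ((lam - (of_nat m1p + of_nat m1m + 2 * of_nat m2p)/2) * T * F - 2 * (T * (1 - T^2)) * F1)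
     + (of_nat m1p + of_nat m1m * T^2 + of_nat m2p * (1 + T^2)) * ((lam - (of_nat m1p + of_nat m1m + 2 * of_nat m2p)/2) * F - 2 * (1 - T^2) * F1)
     - (lam^2 - ((of_nat m1p + of_nat m1m + 2 * of_nat m2p)/2)^2) * F)"
    unfolding P2_def P1_def P0_def GG'_def GG_def F_def[symmetric] F1_def[symmetric] F2_def[symmetric]
      R
    unfolding of_real_mult of_real_diff of_real_minus of_real_numeral
    unfolding T_def[symmetric] w' \<mu>_def \<kappa>_def rho
    using T0 by (simp add: field_simps power2_eq_square)
  also have "\<dots> = Ew s * (4 * (1 - T^2) * 0)"
    unfolding key_alg hyp'[symmetric] ..
  finally show ?thesis by simp
qed

end

context HS
begin

definition "h0 z = exp (\<mu> * Ln (1 + z\<^sup>2)) * hF (4 * z\<^sup>2 / (1 + z\<^sup>2)\<^sup>2)"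

lemma hF_holo: "hF holomorphic_on ball 0 1"
proof -
  have "\<forall>x\<in>ball 0 1. \<exists>f'. DERIV hF x :> f'"
  proof
    fix x :: complex assume "x \<in> ball 0 1"
    then have "DERIV hF x :> hF1 x" unfolding hF_def hF1_def by (intro PS_deriv[OF hc_conv]) simp
    then show "\<exists>f'. DERIV hF x :> f'" by blast
  qed
  then show ?thesis by (simp add: holomorphic_on_open)
qed

lemma h0_holo:
  assumes S: "\<And>z. z \<in> S \<Longrightarrow> 0 < Re (1 + z\<^sup>2) \<and> norm (4 * z\<^sup>2 / (1 + z\<^sup>2)\<^sup>2) < 1"
  shows "h0 holomorphic_on S"
proof -
  have nz: "1 + z\<^sup>2 \<noteq> 0" if "z \<in> S" for z
  proof
    assume "1 + z\<^sup>2 = 0"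
    then have "Re (1 + z\<^sup>2) = 0" by simp
    then show False using S[OF that] by linarith
  qed
  have np: "1 + z\<^sup>2 \<notin> \<real>\<^sub>\<le>\<^sub>0" if "z \<in> S" for z
    using S[OF that] by (auto simp: complex_nonpos_Reals_iff)
  have a: "(\<lambda>z. exp (\<mu> * Ln (1 + z\<^sup>2))) holomorphic_on S"
    by (intro holomorphic_intros) (use np in auto)
  have g: "(\<lambda>z. 4 * z\<^sup>2 / (1 + z\<^sup>2)\<^sup>2) holomorphic_on S"
    by (intro holomorphic_intros) (use nz in auto)
  have "(hF \<circ> (\<lambda>z. 4 * z\<^sup>2 / (1 + z\<^sup>2)\<^sup>2)) holomorphic_on S"
    by (rule holomorphic_on_compose_gen[OF g hF_holo]) (use S in auto)
  then have b: "(\<lambda>z. hF (4 * z\<^sup>2 / (1 + z\<^sup>2)\<^sup>2)) holomorphic_on S" by (simp add: o_def)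
  show ?thesis unfolding h0_def[abs_def] by (rule holomorphic_on_mult[OF a b])
qed

lemma h0_P0: "P0 t = exp (\<mu> * of_real t) * h0 (of_real (exp (- t)))"
proof -
  define x where "x = exp (- t)"
  have x0: "x > 0" unfolding x_def by simp
  have et: "exp t = 1 / x" unfolding x_def by (simp add: exp_minus field_simps)
  have c: "cosh t = (1 + x\<^sup>2) / (2 * x)"
    unfolding cosh_def et using x0 by (simp add: x_def[symmetric] field_simps power2_eq_square)
  have p: "1 + x\<^sup>2 > 0" by (simp add: add_pos_nonneg)
  have "ln (2 * cosh t) = t + ln (1 + x\<^sup>2)"
  proof -
    have "2 * cosh t = exp t * (1 + x\<^sup>2)" unfolding c et using x0 by (simp add: field_simps)
    then show ?thesis using p by (simp add: ln_mult)
  qed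
  then have E: "Ew t = exp (\<mu> * of_real t) * exp (\<mu> * Ln (1 + (of_real x)\<^sup>2))"
    unfolding Ew_def using p by (simp add: Ln_of_real[symmetric] distrib_left exp_add)
  have Wt: "W t = 4 * (of_real x)\<^sup>2 / (1 + (of_real x)\<^sup>2)\<^sup>2"
    unfolding W_def ww_def c using x0 p by (simp add: field_simps power2_eq_square)
  show ?thesis unfolding P0_def E Wt h0_def x_def[symmetric] by simp
qed


lemma ball_cond:
  assumes z: "norm z < 1/3"
  shows "0 < Re (1 + z\<^sup>2) \<and> norm (4 * z\<^sup>2 / (1 + z\<^sup>2)\<^sup>2) < 1"
proof -
  have "norm z ^ 2 < (1/3) ^ 2" by (rule power_strict_mono) (use z in auto)
  then have n2: "9 * norm (z\<^sup>2) < 1" by (simp add: norm_power power_divide)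
  have "Re (z\<^sup>2) \<ge> - norm (z\<^sup>2)" using abs_Re_le_cmod[of "z\<^sup>2"] by linarith
  then have r: "0 < Re (1 + z\<^sup>2)" using n2 by simp
  have "norm (1::complex) \<le> norm (1 + z\<^sup>2) + norm (z\<^sup>2)"
    using norm_triangle_ineq4[of "1 + z\<^sup>2" "z\<^sup>2"] by simp
  then have m: "9 * norm (1 + z\<^sup>2) \<ge> 8" using n2 by simp
  then have m2: "(9 * norm (1 + z\<^sup>2))\<^sup>2 \<ge> 8\<^sup>2" by (intro power_mono) auto
  then have m3: "81 * (norm (1 + z\<^sup>2))\<^sup>2 \<ge> 64" by (simp add: power_mult_distrib)
  have "norm (4 * z\<^sup>2 / (1 + z\<^sup>2)\<^sup>2) = 4 * norm (z\<^sup>2) / (norm (1 + z\<^sup>2))\<^sup>2"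
    by (simp add: norm_divide norm_mult norm_power)
  also have "\<dots> < 1"
  proof -
    have pos: "(norm (1 + z\<^sup>2))\<^sup>2 > 0" using m3 by linarith
    have "4 * norm (z\<^sup>2) < (norm (1 + z\<^sup>2))\<^sup>2" using n2 m3 by linarith
    then show ?thesis using pos by simp
  qed
  finally show ?thesis using r by simp
qed

lemma rect_cond:
  fixes x1 :: real
  assumes x1: "0 < x1" "x1 < 1"
    and z: "0 < Re z" "Re z < x1" "\<bar>Im z\<bar> < (1 - x1\<^sup>2) / 3"
  shows "0 < Re (1 + z\<^sup>2) \<and> norm (4 * z\<^sup>2 / (1 + z\<^sup>2)\<^sup>2) < 1 \<and> norm z < 1"
proof -
  define x where "x = Re z"
  define y where "y = Im z"
  define \<delta> where "\<delta> = (1 - x1\<^sup>2) / 3"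
  have x1s: "x1\<^sup>2 < 1" using x1 by (simp add: power_less_one_iff)
  have d0: "\<delta> > 0" unfolding \<delta>_def using x1s by simp
  have d1: "\<delta> < 1/3" unfolding \<delta>_def using x1 by simp
  have yd: "\<bar>y\<bar> < \<delta>" using z unfolding y_def \<delta>_def by simp
  have "\<bar>y\<bar>\<^sup>2 < \<delta>\<^sup>2" by (rule power_strict_mono) (use yd in auto)
  then have y2: "y\<^sup>2 < \<delta>\<^sup>2" by simp
  have x0: "0 < x" "x < x1" using z unfolding x_def by auto
  have xx: "x\<^sup>2 < x1\<^sup>2" using x0 by (simp add: power_strict_mono)
  have re: "Re (1 + z\<^sup>2) = 1 + x\<^sup>2 - y\<^sup>2" unfolding x_def y_def by (simp add: power2_eq_square)
  have "\<delta>\<^sup>2 < 1\<^sup>2" by (rule power_strict_mono) (use d0 d1 in auto)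
  then have dd: "\<delta>\<^sup>2 < 1" by simp
  have x2nn: "x\<^sup>2 \<ge> 0" by simp
  have A: "0 < Re (1 + z\<^sup>2)" unfolding re using y2 dd x2nn by linarith
  have nz2: "(norm z)\<^sup>2 = x\<^sup>2 + y\<^sup>2" unfolding x_def y_def by (simp add: cmod_power2)
  have n1: "(norm (1 + z\<^sup>2))\<^sup>2 = (1 + x\<^sup>2 - y\<^sup>2)\<^sup>2 + (2 * x * y)\<^sup>2"
    unfolding cmod_power2 x_def y_def by (simp add: power2_eq_square algebra_simps)
  have key: "(1 - x\<^sup>2)\<^sup>2 > 6 * y\<^sup>2"
  proof -
    have "1 - x\<^sup>2 > 3 * \<delta>" unfolding \<delta>_def using xx by simp
    then have "(1 - x\<^sup>2)\<^sup>2 > (3 * \<delta>)\<^sup>2" using d0 by (intro power_strict_mono) auto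
    moreover have "(3 * \<delta>)\<^sup>2 \<ge> 6 * y\<^sup>2"
    proof -
      have a: "\<delta>\<^sup>2 \<ge> 0" by simp
      have b: "(3 * \<delta>)\<^sup>2 = 9 * \<delta>\<^sup>2" by (simp add: power_mult_distrib)
      show ?thesis unfolding b using a y2 by linarith
    qed
    ultimately show ?thesis by linarith
  qed
  have ineq: "4 * (norm z)\<^sup>2 < (norm (1 + z\<^sup>2))\<^sup>2"
  proof -
    have "(norm (1 + z\<^sup>2))\<^sup>2 - 4 * (norm z)\<^sup>2 = (1 - x\<^sup>2)\<^sup>2 - 6 * y\<^sup>2 + 2 * x\<^sup>2 * y\<^sup>2 + y\<^sup>2 * y\<^sup>2"
      unfolding n1 nz2 by (simp add: power2_eq_square algebra_simps)
    moreover have "2 * x\<^sup>2 * y\<^sup>2 + y\<^sup>2 * y\<^sup>2 \<ge> 0" by simp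
    ultimately show ?thesis using key by linarith
  qed
  have "(norm z)\<^sup>2 \<ge> 0" by simp
  then have pos: "(norm (1 + z\<^sup>2))\<^sup>2 > 0" using ineq by linarith
  have B: "norm (4 * z\<^sup>2 / (1 + z\<^sup>2)\<^sup>2) < 1"
  proof -
    have "norm (4 * z\<^sup>2 / (1 + z\<^sup>2)\<^sup>2) = 4 * (norm z)\<^sup>2 / (norm (1 + z\<^sup>2))\<^sup>2"
      by (simp add: norm_divide norm_mult norm_power)
    then show ?thesis using ineq pos by simp
  qed
  have C: "norm z < 1"
  proof -
    have "\<delta>\<^sup>2 \<le> \<delta>" using d0 d1 by (simp add: power2_eq_square)
    moreover have "\<delta> < 1 - x1\<^sup>2" unfolding \<delta>_def using x1s by simp
    ultimately have "(norm z)\<^sup>2 < 1" unfolding nz2 using xx y2 by linarith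
    then show ?thesis by (simp add: power_less_one_iff)
  qed
  show ?thesis using A B C by blast
qed

definition "\<Gamma>2 n = (deriv ^^ n) h0 0 / fact n"

lemma taylor:
  assumes "norm w < 1/3"
  shows "(\<lambda>n. \<Gamma>2 n * w ^ n) sums h0 w"
proof -
  have "h0 holomorphic_on ball 0 (1/3)" by (rule h0_holo) (use ball_cond in auto)
  from holomorphic_power_series[OF this, of w] assms show ?thesis by (simp add: \<Gamma>2_def)
qed

lemma conv_\<Gamma>2: "conv \<Gamma>2 (1/3)"
  unfolding conv_def
proof (intro allI impI)
  fix x :: real assume x: "0 < x \<and> x < 1/3"
  have "(\<lambda>n. \<Gamma>2 n * of_real x ^ n) sums h0 (of_real x)" by (rule taylor) (use x in simp)
  then show "summable (\<lambda>n. \<Gamma>2 n * of_real x ^ n)" by (rule sums_summable)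
qed

lemma \<Gamma>2_0: "\<Gamma>2 0 = 1"
  by (simp add: \<Gamma>2_def h0_def hF_def PS_def)

lemma Ser_\<Gamma>2_small: "exp (- t) < 1/3 \<Longrightarrow> Ser \<mu> \<Gamma>2 t = P0 t"
  unfolding Ser_def h0_P0 PS_def using taylor[of "of_real (exp (- t))"] by (simp add: sums_iff)

end

context HS
begin

definition "sC = (of_nat (m1p + m1m + 2 * m2p) :: complex)"
definition "dC = (2 * (of_nat m1p - of_nat m1m) :: complex)"

lemma rho_c: "(of_real \<rho> :: complex) = (of_nat m1p + of_nat m1m + 2 * of_nat m2p) / 2"
  unfolding \<rho>_def rho_mult_def by simp

lemma c0_nz:
  assumes n: "n \<ge> 1" shows "c0 \<mu> \<kappa> sC n \<noteq> 0"
proof -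
  have "c0 \<mu> \<kappa> sC n = of_nat n * (of_nat n - 2 * lam)"
    unfolding c0_def \<mu>_def \<kappa>_def sC_def rho_c by (simp add: field_simps power2_eq_square)
  moreover have "of_nat n - 2 * lam \<noteq> 0"
  proof
    assume "of_nat n - 2 * lam = 0"
    then have "lam = of_nat n / 2" by (simp add: field_simps)
    then show False using lam_ok by blast
  qed
  ultimately show ?thesis using n by simp
qed

lemma Ser_transfer:
  assumes U: "open U" "U \<subseteq> {0<..}" "\<And>s. s \<in> U \<Longrightarrow> exp (- s) < r"
    and cv: "conv \<Gamma> r" and eq: "\<And>s. s \<in> U \<Longrightarrow> Ser \<mu> \<Gamma> s = P0 s" and t: "t \<in> U"
  shows "Ser \<mu> (th \<mu> \<Gamma>) t = P1 t" "Ser \<mu> (th \<mu> (th \<mu> \<Gamma>)) t = P2 t"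
proof -
  have step: "Ser \<mu> (th \<mu> G) s = f' s"
    if cvG: "conv G r" and e: "\<And>s. s \<in> U \<Longrightarrow> f s = Ser \<mu> G s"
      and d: "\<And>s. s \<in> U \<Longrightarrow> (f has_vector_derivative f' s) (at s)" and s: "s \<in> U" for G f f' s
  proof -
    have "(Ser \<mu> G has_vector_derivative Ser \<mu> (th \<mu> G) s) (at s)"
      unfolding th_def by (rule Ser_deriv[OF cvG U(3)[OF s]])
    moreover have "(Ser \<mu> G has_vector_derivative f' s) (at s)"
      by (rule has_vector_derivative_transform_within_open[OF d[OF s] U(1) s e])
    ultimately show ?thesis by (rule vector_derivative_unique_at)
  qed
  have pos: "\<And>s. s \<in> U \<Longrightarrow> s > 0" using U(2) by auto
  have e0: "\<And>s. s \<in> U \<Longrightarrow> P0 s = Ser \<mu> \<Gamma> s" using eq by simp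
  have d0: "\<And>s. s \<in> U \<Longrightarrow> (P0 has_vector_derivative P1 s) (at s)" using vd_P0 pos by blast
  have A: "\<And>s. s \<in> U \<Longrightarrow> Ser \<mu> (th \<mu> \<Gamma>) s = P1 s" using step[OF cv e0 d0] by blast
  show "Ser \<mu> (th \<mu> \<Gamma>) t = P1 t" by (rule A[OF t])
  have e1: "\<And>s. s \<in> U \<Longrightarrow> P1 s = Ser \<mu> (th \<mu> \<Gamma>) s" using A by simp
  have d1: "\<And>s. s \<in> U \<Longrightarrow> (P1 has_vector_derivative P2 s) (at s)" using vd_P1 pos by blast
  show "Ser \<mu> (th \<mu> (th \<mu> \<Gamma>)) t = P2 t" using step[OF conv_th[OF cv] e1 d1 t] .
qed

lemma Ser_ode:
  assumes U: "open U" "U \<subseteq> {0<..}" "\<And>s. s \<in> U \<Longrightarrow> exp (- s) < r"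
    and cv: "conv \<Gamma> r" and eq: "\<And>s. s \<in> U \<Longrightarrow> Ser \<mu> \<Gamma> s = P0 s" and t: "t \<in> U"
  shows "Ser \<mu> (th \<mu> (th \<mu> \<Gamma>)) t + of_real (Rr m1p m1m m2p t) * Ser \<mu> (th \<mu> \<Gamma>) t = \<kappa> * Ser \<mu> \<Gamma> t"
proof -
  have t0: "t > 0" using U(2) t by auto
  have a: "Ser \<mu> (th \<mu> \<Gamma>) t = P1 t" and b: "Ser \<mu> (th \<mu> (th \<mu> \<Gamma>)) t = P2 t"
    using Ser_transfer[OF assms] by auto
  show ?thesis unfolding a b eq[OF t] by (rule P_ode[OF t0])
qed

lemma Rec_\<Gamma>2: "qc \<mu> \<kappa> sC dC \<Gamma>2 n = 0"
  unfolding sC_def dC_def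
proof (rule ODE_series_Rec[OF conv_\<Gamma>2])
  fix t :: real assume t: "exp (- t) < 1/3"
  have l3: "ln 3 > (0::real)" by simp
  have U3: "exp (- s) < 1/3" if "s \<in> {ln 3<..}" for s :: real
  proof -
    have "exp (- s) < exp (- ln 3)" using that by simp
    then show ?thesis by (simp add: exp_minus)
  qed
  have "t \<in> {ln 3<..}"
  proof -
    have "1 / exp t < 1/3" using t by (simp add: exp_minus inverse_eq_divide)
    then have "3 < exp t" by (simp add: field_simps)
    then have "ln 3 < ln (exp t)" by (subst ln_less_cancel_iff) auto
    then show ?thesis by simp
  qed
  from Ser_ode[of "{ln 3<..}" "1/3" \<Gamma>2 t, OF _ _ U3 conv_\<Gamma>2 Ser_\<Gamma>2_small[OF U3] this]
  show "Ser \<mu> (th \<mu> (th \<mu> \<Gamma>2)) t + of_real (Rr m1p m1m m2p t) * Ser \<mu> (th \<mu> \<Gamma>2) t = \<kappa> * Ser \<mu> \<Gamma>2 t"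
    using l3 by auto
qed auto

lemma conv1_\<Gamma>2: "conv \<Gamma>2 1"
  by (rule Rec_conv[OF Rec_\<Gamma>2])

end

context HS
begin

lemma PS_holo: "conv a 1 \<Longrightarrow> PS a holomorphic_on ball 0 1"
proof -
  assume cv: "conv a 1"
  have "\<forall>x\<in>ball 0 1. \<exists>f'. DERIV (PS a) x :> f'"
  proof
    fix x :: complex assume "x \<in> ball 0 1"
    then have "DERIV (PS a) x :> PS (diffs a) x" by (intro PS_deriv[OF cv]) simp
    then show "\<exists>f'. DERIV (PS a) x :> f'" by blast
  qed
  then show ?thesis by (simp add: holomorphic_on_open)
qed

lemma h0_eq_PS:
  assumes x0: "0 < x0" "x0 < 1"
  shows "h0 (of_real x0) = PS \<Gamma>2 (of_real x0)"
proof -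
  define x1 where "x1 = (1 + x0) / 2"
  define \<delta> where "\<delta> = (1 - x1\<^sup>2) / 3"
  have x1: "0 < x1" "x1 < 1" "1/2 < x1" "x0 < x1" using x0 unfolding x1_def by auto
  have d0: "\<delta> > 0" unfolding \<delta>_def using x1 by (simp add: power_less_one_iff)
  define R where "R = {z. Re z > 0} \<inter> {z. Re z < x1} \<inter> {z. Im z < \<delta>} \<inter> {z. Im z > - \<delta>}"
  have Rc: "0 < Re (1 + z\<^sup>2) \<and> norm (4 * z\<^sup>2 / (1 + z\<^sup>2)\<^sup>2) < 1 \<and> norm z < 1" if "z \<in> R" for z
  proof -
    have "\<bar>Im z\<bar> < \<delta>" using that unfolding R_def by (auto simp: abs_less_iff)
    then show ?thesis
      by (intro rect_cond[OF x1(1,2)]) (use that in \<open>auto simp: R_def \<delta>_def\<close>)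
  qed
  have oR: "open R" unfolding R_def
    by (intro open_Int open_halfspace_Re_gt open_halfspace_Re_lt open_halfspace_Im_lt open_halfspace_Im_gt)
  have cR: "connected R" unfolding R_def
    by (intro convex_connected convex_Int convex_halfspace_Re_gt convex_halfspace_Re_lt
        convex_halfspace_Im_lt convex_halfspace_Im_gt)
  have hR: "h0 holomorphic_on R" by (rule h0_holo) (use Rc in blast)
  have gR: "PS \<Gamma>2 holomorphic_on R"
    by (rule holomorphic_on_subset[OF PS_holo[OF conv1_\<Gamma>2]]) (use Rc in auto)
  define S where "S = R \<inter> ball 0 (1/3)"
  have oS: "open S" unfolding S_def using oR by auto
  have "of_real (1/6) \<in> S" unfolding S_def R_def using x1 d0 by auto
  then have nS: "S \<noteq> {}" by auto
  have eqS: "h0 z = PS \<Gamma>2 z" if "z \<in> S" for z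
  proof -
    have "norm z < 1/3" using that unfolding S_def by auto
    from taylor[OF this] show ?thesis unfolding PS_def by (simp add: sums_iff)
  qed
  have "of_real x0 \<in> R" unfolding R_def using x0 x1 d0 by auto
  moreover have sub: "S \<subseteq> R" unfolding S_def by auto
  ultimately show ?thesis using analytic_continuation_open[OF oS oR nS cR sub hR gR eqS] by blast
qed

lemma Ser_\<Gamma>2: "t > 0 \<Longrightarrow> Ser \<mu> \<Gamma>2 t = P0 t"
  unfolding Ser_def h0_P0 by (subst h0_eq_PS) auto

lemma HC_Ser: "HC_sum m1p m1m m2p 0 lam \<Gamma> = Ser \<mu> \<Gamma>"
proof
  fix t
  have "\<And>m. exp (- (real m * t)) = exp (- t) ^ m"
    by (metis exp_of_nat_mult mult_minus_right)
  then show "HC_sum m1p m1m m2p 0 lam \<Gamma> t = Ser \<mu> \<Gamma> t"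
    unfolding HC_sum_def Ser_def PS_def \<mu>_def \<rho>_def by simp
qed


lemma exp_pow: "exp (- (real m * t)) = exp (- t) ^ m"
  by (metis exp_of_nat_mult mult_minus_right)

lemma conv_sum:
  assumes "conv \<Gamma> 1" "t > 0"
  shows "summable (\<lambda>m. \<Gamma> m * complex_of_real (exp (- (real m * t))))"
  using assms(1) unfolding conv_def exp_pow of_real_power using assms(2) by auto

lemma sum_conv:
  assumes "\<forall>t>0. summable (\<lambda>m. \<Gamma> m * complex_of_real (exp (- (real m * t))))"
  shows "conv \<Gamma> 1"
  unfolding conv_def
proof (intro allI impI)
  fix x :: real assume x: "0 < x \<and> x < 1"
  define t where "t = - ln x"
  have t0: "t > 0" using x unfolding t_def by simp
  have ex: "exp (- t) = x" using x unfolding t_def by simp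
  have "summable (\<lambda>m. \<Gamma> m * of_real (exp (- t)) ^ m)"
    using assms t0 unfolding exp_pow of_real_power by auto
  then show "summable (\<lambda>m. \<Gamma> m * of_real x ^ m)" unfolding ex .
qed

lemma Ser_L:
  assumes cv: "conv \<Gamma> 1" and t: "t > 0"
  shows "radial_L m1p m1m m2p 0 (Ser \<mu> \<Gamma>) t
           = Ser \<mu> (th \<mu> (th \<mu> \<Gamma>)) t + of_real (Rr m1p m1m m2p t) * Ser \<mu> (th \<mu> \<Gamma>) t"
    and "(\<lambda>s. Jfun m1p m1m m2p 0 s *\<^sub>R vector_derivative (Ser \<mu> \<Gamma>) (at s)) differentiable (at t)"
    and "Ser \<mu> \<Gamma> differentiable (at t)"
proof -
  have e: "exp (- s) < 1" if "s \<in> {0<..}" for s :: real using that by simp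
  have d1: "(Ser \<mu> \<Gamma> has_vector_derivative Ser \<mu> (th \<mu> \<Gamma>) s) (at s)" if "s \<in> {0<..}" for s
    unfolding th_def by (rule Ser_deriv[OF cv e[OF that]])
  have d2: "(Ser \<mu> (th \<mu> \<Gamma>) has_vector_derivative Ser \<mu> (th \<mu> (th \<mu> \<Gamma>)) t) (at t)"
    unfolding th_def[of _ "th \<mu> \<Gamma>"] by (rule Ser_deriv[OF conv_th[OF cv]]) (use t in simp)
  have U: "open ({0<..} :: real set)" "t \<in> {0<..}" "({0<..} :: real set) \<subseteq> {0<..}" using t by auto
  show "radial_L m1p m1m m2p 0 (Ser \<mu> \<Gamma>) t
           = Ser \<mu> (th \<mu> (th \<mu> \<Gamma>)) t + of_real (Rr m1p m1m m2p t) * Ser \<mu> (th \<mu> \<Gamma>) t"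
    by (rule L_formula(1)[OF U d1 d2])
  show "(\<lambda>s. Jfun m1p m1m m2p 0 s *\<^sub>R vector_derivative (Ser \<mu> \<Gamma>) (at s)) differentiable (at t)"
    by (rule differentiableI_vector, rule L_formula(2)[OF U d1 d2])
  show "Ser \<mu> \<Gamma> differentiable (at t)"
    by (rule differentiableI_vector, rule d1) (use t in simp)
qed

lemma kappa_eq: "\<kappa> = lam\<^sup>2 - (complex_of_real (rho_mult m1p m1m m2p 0))\<^sup>2"
  unfolding \<kappa>_def \<rho>_def ..

lemma sol_\<Gamma>2: "HC_series_solution m1p m1m m2p 0 lam \<Gamma>2"
  unfolding HC_series_solution_def Let_def HC_Ser kappa_eq[symmetric]
proof (intro conjI allI impI)
  show "\<Gamma>2 0 = 1" by (rule \<Gamma>2_0)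
  fix t :: real assume t: "t > 0"
  show "summable (\<lambda>m. \<Gamma>2 m * complex_of_real (exp (- (real m * t))))"
    by (rule conv_sum[OF conv1_\<Gamma>2 t])
  show "Ser \<mu> \<Gamma>2 differentiable at t" by (rule Ser_L(3)[OF conv1_\<Gamma>2 t])
  show "(\<lambda>s. Jfun m1p m1m m2p 0 s *\<^sub>R vector_derivative (Ser \<mu> \<Gamma>2) (at s)) differentiable at t"
    by (rule Ser_L(2)[OF conv1_\<Gamma>2 t])
  have "Ser \<mu> (th \<mu> (th \<mu> \<Gamma>2)) t + of_real (Rr m1p m1m m2p t) * Ser \<mu> (th \<mu> \<Gamma>2) t = \<kappa> * Ser \<mu> \<Gamma>2 t"
    by (rule Ser_ode[of "{0<..}" 1]) (use t Ser_\<Gamma>2 conv1_\<Gamma>2 in auto)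
  then show "radial_L m1p m1m m2p 0 (Ser \<mu> \<Gamma>2) t = \<kappa> * Ser \<mu> \<Gamma>2 t"
    unfolding Ser_L(1)[OF conv1_\<Gamma>2 t] .
qed

lemma sol_unique:
  assumes sol: "HC_series_solution m1p m1m m2p 0 lam \<Gamma>"
  shows "\<Gamma> = \<Gamma>2"
proof -
  have g0: "\<Gamma> 0 = 1" using sol unfolding HC_series_solution_def by simp
  have cv: "conv \<Gamma> 1" using sol unfolding HC_series_solution_def by (intro sum_conv) simp
  have ode: "radial_L m1p m1m m2p 0 (Ser \<mu> \<Gamma>) t = \<kappa> * Ser \<mu> \<Gamma> t" if "t > 0" for t
    using sol that unfolding HC_series_solution_def Let_def HC_Ser kappa_eq[symmetric] by blast
  have rec: "qc \<mu> \<kappa> sC dC \<Gamma> n = 0" for n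
    unfolding sC_def dC_def
  proof (rule ODE_series_Rec[OF cv])
    fix t :: real assume "exp (- t) < 1"
    then have t: "t > 0" by simp
    show "Ser \<mu> (th \<mu> (th \<mu> \<Gamma>)) t + of_real (Rr m1p m1m m2p t) * Ser \<mu> (th \<mu> \<Gamma>) t = \<kappa> * Ser \<mu> \<Gamma> t"
      using ode[OF t] unfolding Ser_L(1)[OF cv t] .
  qed auto
  show ?thesis
  proof
    fix n show "\<Gamma> n = \<Gamma>2 n"
      by (rule Rec_unique[OF rec Rec_\<Gamma>2]) (use g0 \<Gamma>2_0 c0_nz in auto)
  qed
qed

lemma HC_Phi_eq: "HC_Phi m1p m1m m2p 0 lam = Ser \<mu> \<Gamma>2"
  unfolding HC_Phi_def
proof (rule the_equality)
  show "\<exists>\<Gamma>. HC_series_solution m1p m1m m2p 0 lam \<Gamma> \<and> Ser \<mu> \<Gamma>2 = HC_sum m1p m1m m2p 0 lam \<Gamma>"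
    by (intro exI[of _ \<Gamma>2]) (simp add: sol_\<Gamma>2 HC_Ser)
  fix f assume "\<exists>\<Gamma>. HC_series_solution m1p m1m m2p 0 lam \<Gamma> \<and> f = HC_sum m1p m1m m2p 0 lam \<Gamma>"
  then obtain \<Gamma> where "HC_series_solution m1p m1m m2p 0 lam \<Gamma>" "f = HC_sum m1p m1m m2p 0 lam \<Gamma>" by blast
  then show "f = Ser \<mu> \<Gamma>2" using sol_unique HC_Ser by simp
qed

end

theorem proposition2p5:
  fixes m1p m1m m2p m2m :: nat and lam :: complex and t :: real
  assumes "m2m = 0"
    and "t > 0"
    and "\<forall>n::nat. lam \<noteq> of_nat n / 2"
  shows "Phi0 m1p m1m m2p m2m lam t = HC_Phi m1p m1m m2p m2m lam t"
proof -
  interpret HS m1p m1m m2p lam by unfold_locales (rule assms(3))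
  show ?thesis unfolding assms(1) Phi0_eq HC_Phi_eq Ser_\<Gamma>2[OF assms(2)] ..
qed


end
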